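(* Let $m\geq1$ be an integer and let $\{c_n\}_{n=0}^\infty$ be a real sequence such that $F(r)=\sum_{n=0}^\infty c_nr^n$ converges for $|r|<1$, and suppose that $nc_n=O_{\mathrm{L}}(1)$ $(\mathrm{C},m)$, i.e. there is $K>0$ with $$\frac{m!}{n^m}\sum_{k=0}^{n}\binom{k+m-1}{m-1}(n-k)c_{n-k}>-K\quad\text{for all }n\geq1.$$ Let $a,b$ be constants. Then $$F(r)=a+b\log\left(\frac{1}{1-r}\right)+o(1),\qquad r\to1^-,$$ if and only if $$\lim_{N\to\infty}\left(\sum_{n=0}^Nc_n-b\log N\right)=a+b\gamma\quad(\mathrm{C},m),$$ where $\gamma$ is Euler's constant.
   Context: For a sequence $\{u_k\}_{k\geq0}$, $C_m\{u_k;n\}=\frac{m!}{n^m}\sum_{k=0}^{n}\binom{k+m-1}{m-1}u_{n-k}$ ($n\geq1$) are its Cesàro means of order $m$, and $\lim_{N\to\infty}u_N=\ell$ $(\mathrm{C},m)$ means $\lim_{n\to\infty}C_m\{u_k;n\}=\ell$. Here $u_N=\sum_{n=0}^Nc_n-b\log N$ for $N\geq1$ (the value of $u_0$ is irrelevant, e.g. $u_0=c_0$). *)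

theory Defs
  imports "HOL-Analysis.Analysis"
begin

definition cesaro_mean :: "nat \<Rightarrow> (nat \<Rightarrow> real) \<Rightarrow> nat \<Rightarrow> real" where
  "cesaro_mean m u n = fact m / real n ^ m *
     (\<Sum>k = 0..n. real ((k + m - 1) choose (m - 1)) * u (n - k))"

definition cesaro_lim :: "nat \<Rightarrow> (nat \<Rightarrow> real) \<Rightarrow> real \<Rightarrow> bool" where
  "cesaro_lim m u l \<longleftrightarrow> (\<lambda>n. cesaro_mean m u n) \<longlonglongrightarrow> l"

end

theory Submission
  imports Defs
begin

definition pv :: "(nat \<Rightarrow> real) \<Rightarrow> nat \<Rightarrow> real \<Rightarrow> real" where
  "pv a N t = (\<Sum>i\<le>N. a i * t ^ i)"

lemma pow_mono_rewrite: "(x::real) ^ n * (x ^ n) ^ k = (x ^ Suc k) ^ n"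
proof -
  have "(x::real) ^ n * (x ^ n) ^ k = (x ^ n) ^ Suc k" by simp
  also have "\<dots> = x ^ (n * Suc k)" by (rule power_mult[symmetric])
  also have "\<dots> = (x ^ Suc k) ^ n" by (subst mult.commute) (rule power_mult)
  finally show ?thesis .
qed

lemma mono_abel_lim:
  "((\<lambda>x::real. (1 - x) * (\<Sum>n. x ^ n * (x ^ n) ^ k)) \<longlongrightarrow> 1 / real (Suc k)) (at_left 1)"
proof -
  have ev: "eventually (\<lambda>x. 1 / (\<Sum>i<Suc k. x ^ i) = (1 - x) * (\<Sum>n. x ^ n * (x ^ n) ^ k)) (at_left (1::real))"
    using eventually_at_left_real[of 0 "1::real", OF zero_less_one]
  proof eventually_elim
    case (elim x)
    then have x: "0 < x" "x < 1" by auto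
    have xk: "x ^ Suc k < 1" using x by (intro power_Suc_less_one)
    have "(\<Sum>n. x ^ n * (x ^ n) ^ k) = 1 / (1 - x ^ Suc k)"
      unfolding pow_mono_rewrite using x xk by (intro suminf_geometric) auto
    also have "1 - x ^ Suc k = (1 - x) * (\<Sum>i<Suc k. x ^ i)"
      by (rule one_diff_power_eq)
    finally have "(1 - x) * (\<Sum>n. x ^ n * (x ^ n) ^ k) = (1 - x) * (1 / ((1 - x) * (\<Sum>i<Suc k. x ^ i)))"
      by simp
    also have "\<dots> = 1 / (\<Sum>i<Suc k. x ^ i)" using x by simp
    finally show ?case by simp
  qed
  have "((\<lambda>x::real. 1 / (\<Sum>i<Suc k. x ^ i)) \<longlongrightarrow> 1 / (\<Sum>i<Suc k. (1::real) ^ i)) (at_left 1)"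
    by (intro tendsto_intros) auto
  then have "((\<lambda>x::real. 1 / (\<Sum>i<Suc k. x ^ i)) \<longlongrightarrow> 1 / real (Suc k)) (at_left 1)"
    by simp
  then show ?thesis using ev by (rule Lim_transform_eventually)
qed

lemma summable_mono_pow:
  assumes "0 \<le> (x::real)" "x < 1"
  shows "summable (\<lambda>n. x ^ n * (x ^ n) ^ k)"
  unfolding pow_mono_rewrite using assms
  by (intro summable_geometric) (auto simp: power_less_one_iff[of "x" "Suc k"] simp del: power_Suc)

lemma poly_abel_lim:
  "((\<lambda>x::real. (1 - x) * (\<Sum>n. x ^ n * pv a N (x ^ n))) \<longlongrightarrow> (\<Sum>i\<le>N. a i / real (Suc i))) (at_left 1)"
proof -
  have ev: "eventually (\<lambda>x. (\<Sum>i\<le>N. a i * ((1 - x) * (\<Sum>n. x ^ n * (x ^ n) ^ i))) =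
        (1 - x) * (\<Sum>n. x ^ n * pv a N (x ^ n))) (at_left (1::real))"
    using eventually_at_left_real[of 0 "1::real", OF zero_less_one]
  proof eventually_elim
    case (elim x)
    then have x: "0 \<le> x" "x < 1" by auto
    have "(\<Sum>n. x ^ n * pv a N (x ^ n)) = (\<Sum>n. \<Sum>i\<le>N. a i * (x ^ n * (x ^ n) ^ i))"
      unfolding pv_def by (simp add: sum_distrib_left mult_ac)
    also have "\<dots> = (\<Sum>i\<le>N. \<Sum>n. a i * (x ^ n * (x ^ n) ^ i))"
      by (rule suminf_sum) (intro summable_mult summable_mono_pow x)
    also have "\<dots> = (\<Sum>i\<le>N. a i * (\<Sum>n. x ^ n * (x ^ n) ^ i))"
      by (intro sum.cong refl suminf_mult summable_mono_pow x)
    finally show ?case by (simp add: sum_distrib_left mult_ac)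
  qed
  have "((\<lambda>x::real. (\<Sum>i\<le>N. a i * ((1 - x) * (\<Sum>n. x ^ n * (x ^ n) ^ i)))) \<longlongrightarrow> (\<Sum>i\<le>N. a i * (1 / real (Suc i)))) (at_left 1)"
    by (intro tendsto_sum tendsto_mult tendsto_const mono_abel_lim)
  then have "((\<lambda>x::real. (\<Sum>i\<le>N. a i * ((1 - x) * (\<Sum>n. x ^ n * (x ^ n) ^ i)))) \<longlongrightarrow> (\<Sum>i\<le>N. a i / real (Suc i))) (at_left 1)"
    by simp
  then show ?thesis using ev by (rule Lim_transform_eventually)
qed

lemma pv_has_integral:
  "(pv a N has_integral (\<Sum>i\<le>N. a i / real (Suc i))) {0..1}"
proof -
  have "((\<lambda>t. a i * t ^ i) has_integral (a i / real (Suc i))) {0..1}" for i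
  proof -
    have "((\<lambda>t. a i * t ^ i) has_integral ((\<lambda>t. a i * t ^ Suc i / real (Suc i)) 1 - (\<lambda>t. a i * t ^ Suc i / real (Suc i)) 0)) {0..1}"
      apply (rule fundamental_theorem_of_calculus)
       apply simp
      unfolding has_real_derivative_iff_has_vector_derivative[symmetric]
      by (rule derivative_eq_intros refl | simp)+
    then show ?thesis by simp
  qed
  then show ?thesis unfolding pv_def
    by (intro has_integral_sum) auto
qed

lemma poly_approx:
  assumes "continuous_on {0..1} (\<phi>::real \<Rightarrow> real)" "\<eta> > 0"
  obtains a N where "\<And>t. t \<in> {0..1} \<Longrightarrow> \<bar>\<phi> t - pv a N t\<bar> < \<eta>"
proof -
  obtain g where g: "real_polynomial_function g" "\<And>x. x \<in> {0..1} \<Longrightarrow> \<bar>\<phi> x - g x\<bar> < \<eta>"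
    using Stone_Weierstrass_real_polynomial_function[OF compact_Icc assms(1) assms(2)] by blast
  then obtain a N where "g = (\<lambda>x. \<Sum>i\<le>N. a i * x ^ i)"
    using real_polynomial_function_iff_sum by blast
  then have "g = pv a N" by (simp add: pv_def fun_eq_iff)
  then show ?thesis using g that by blast
qed

lemma pv_shift_const: "pv (\<lambda>i. a i + (if i = 0 then c else 0)) N t = pv a N t + c"
proof -
  have "(\<Sum>i\<le>N. (if i = 0 then c else 0) * t ^ i) = (\<Sum>i\<le>N. (if i = 0 then c else 0))"
    by (intro sum.cong) auto
  also have "\<dots> = c" by (simp add: sum.delta)
  finally show ?thesis by (simp add: pv_def sum.distrib distrib_right)
qed

lemma sandwich_poly:
  assumes "continuous_on {0..1} \<phi>1" "continuous_on {0..1} \<phi>2"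
    and "\<And>t. t \<in> {0..1} \<Longrightarrow> \<phi>1 t \<le> G t \<and> G t \<le> \<phi>2 t" and "(\<eta>::real) > 0"
  obtains a1 N1 a2 N2 where "\<And>t. t\<in>{0..1} \<Longrightarrow> pv a1 N1 t \<le> G t \<and> G t \<le> pv a2 N2 t"
    "\<And>t. t\<in>{0..1} \<Longrightarrow> pv a2 N2 t - pv a1 N1 t \<le> \<phi>2 t - \<phi>1 t + 4 * \<eta>"
proof -
  obtain b1 N1 where b1: "\<And>t. t \<in> {0..1} \<Longrightarrow> \<bar>\<phi>1 t - pv b1 N1 t\<bar> < \<eta>"
    using poly_approx[OF assms(1) assms(4)] by blast
  obtain b2 N2 where b2: "\<And>t. t \<in> {0..1} \<Longrightarrow> \<bar>\<phi>2 t - pv b2 N2 t\<bar> < \<eta>"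
    using poly_approx[OF assms(2) assms(4)] by blast
  define a1 where "a1 = (\<lambda>i. b1 i + (if i = 0 then - \<eta> else 0))"
  define a2 where "a2 = (\<lambda>i. b2 i + (if i = 0 then \<eta> else 0))"
  have e1: "pv a1 N1 t = pv b1 N1 t - \<eta>" for t unfolding a1_def pv_shift_const by simp
  have e2: "pv a2 N2 t = pv b2 N2 t + \<eta>" for t unfolding a2_def pv_shift_const by simp
  show ?thesis
  proof (rule that[of a1 N1 a2 N2])
    fix t :: real assume t: "t \<in> {0..1}"
    show "pv a1 N1 t \<le> G t \<and> G t \<le> pv a2 N2 t"
      using b1[OF t] b2[OF t] assms(3)[OF t] unfolding e1 e2 by linarith
    show "pv a2 N2 t - pv a1 N1 t \<le> \<phi>2 t - \<phi>1 t + 4 * \<eta>"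
      using b1[OF t] b2[OF t] unfolding e1 e2 by linarith
  qed
qed

definition Lam :: "(nat \<Rightarrow> real) \<Rightarrow> nat \<Rightarrow> real" where
  "Lam a N = (\<Sum>i\<le>N. a i / real (Suc i))"

definition Gfun :: "real \<Rightarrow> real \<Rightarrow> real" where
  "Gfun c t = (if t < c then - 1 / (1 - t) else 1 / t)"

lemma Gfun_approx:
  assumes c: "0 < c" "c < 1" and \<epsilon>: "\<epsilon> > 0"
  obtains a1 N1 a2 N2 where "\<And>t. t\<in>{0..1} \<Longrightarrow> pv a1 N1 t \<le> Gfun c t \<and> Gfun c t \<le> pv a2 N2 t"
    "Lam a2 N2 - Lam a1 N1 < \<epsilon>"
proof -
  define L where "L = (\<lambda>t::real. - 1 / (1 - t))"
  define R where "R = (\<lambda>t::real. 1 / t)"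
  define J where "J = R c - L c"
  have Jpos: "J > 0" using c by (simp add: J_def L_def R_def add_pos_pos)
  define \<delta> where "\<delta> = min (min c (1 - c) / 2) (\<epsilon> / (8 * J))"
  have d1: "\<delta> \<le> c / 2" "\<delta> \<le> (1 - c) / 2" "\<delta> \<le> \<epsilon> / (8 * J)" unfolding \<delta>_def
    by (simp_all only: min_le_iff_disj) (auto simp: min_def)
  have d0: "\<delta> > 0" using c \<epsilon> Jpos unfolding \<delta>_def by auto
  have "2 * \<delta> * J \<le> 2 * (\<epsilon> / (8 * J)) * J"
    using d1 Jpos by (intro mult_right_mono) auto
  also have "\<dots> = \<epsilon> / 4" using Jpos by simp
  finally have d2: "2 * \<delta> * J \<le> \<epsilon> / 4" .
  have \<delta>: "\<delta> > 0" "c - \<delta> > 0" "c + \<delta> < 1" "2 * \<delta> * J \<le> \<epsilon> / 4"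
    using d0 d1 d2 c by (auto simp: min_def split: if_splits)
  define \<eta> where "\<eta> = \<epsilon> / 32"
  have \<eta>: "\<eta> > 0" using \<epsilon> by (simp add: \<eta>_def)
  define lin2 where "lin2 = (\<lambda>t. L (c - \<delta>) + (R c - L (c - \<delta>)) * (t - (c - \<delta>)) / \<delta>)"
  define lin1 where "lin1 = (\<lambda>t. L c + (R (c + \<delta>) - L c) * (t - c) / \<delta>)"
  define \<phi>2 where "\<phi>2 = (\<lambda>t. if t \<le> c then (if t \<le> c - \<delta> then L t else lin2 t) else R t)"
  define \<phi>1 where "\<phi>1 = (\<lambda>t. if t \<le> c + \<delta> then (if t \<le> c then L t else lin1 t) else R t)"
  have Lmono: "L s \<le> L t" if "t \<le> s" "s < 1" for s t
    using that by (auto simp: L_def field_simps)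
  have Rmono: "R s \<le> R t" if "0 < t" "t \<le> s" for s t
    using that by (auto simp: R_def field_simps)
  have Lneg: "L t < 0" if "t < 1" for t using that by (simp add: L_def)
  have Rpos: "R t > 0" if "t > 0" for t using that by (simp add: R_def)
  have contL: "continuous_on A L" if "\<And>t. t \<in> A \<Longrightarrow> t < 1" for A
    unfolding L_def using that by (intro continuous_intros) force
  have contR: "continuous_on A R" if "\<And>t. t \<in> A \<Longrightarrow> t > 0" for A
    unfolding R_def using that by (intro continuous_intros) force
  have cont2: "continuous_on {0..1} \<phi>2"
    unfolding \<phi>2_def
  proof (rule continuous_on_cases_le[where h = "\<lambda>t. t"])
    show "continuous_on {x \<in> {0..1}. x \<le> c} (\<lambda>t. if t \<le> c - \<delta> then L t else lin2 t)"
    proof (rule continuous_on_cases_le[where h = "\<lambda>t. t"])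
      show "continuous_on {x \<in> {x \<in> {0..1}. x \<le> c}. x \<le> c - \<delta>} L"
        using c by (intro contL) auto
      show "continuous_on {x \<in> {x \<in> {0..1}. x \<le> c}. c - \<delta> \<le> x} lin2"
        unfolding lin2_def using \<delta>(1) by (intro continuous_intros) auto
    qed (auto simp: lin2_def intro: continuous_intros)
    show "continuous_on {x \<in> {0..1}. c \<le> x} R"
      using c by (intro contR) auto
  qed (use \<delta> in \<open>auto simp: lin2_def intro: continuous_intros\<close>)
  have cont1: "continuous_on {0..1} \<phi>1"
    unfolding \<phi>1_def
  proof (rule continuous_on_cases_le[where h = "\<lambda>t. t"])
    show "continuous_on {x \<in> {0..1}. x \<le> c + \<delta>} (\<lambda>t. if t \<le> c then L t else lin1 t)"
    proof (rule continuous_on_cases_le[where h = "\<lambda>t. t"])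
      show "continuous_on {x \<in> {x \<in> {0..1}. x \<le> c + \<delta>}. x \<le> c} L"
        using c by (intro contL) auto
      show "continuous_on {x \<in> {x \<in> {0..1}. x \<le> c + \<delta>}. c \<le> x} lin1"
        unfolding lin1_def using \<delta>(1) by (intro continuous_intros) auto
    qed (auto simp: lin1_def intro: continuous_intros)
    show "continuous_on {x \<in> {0..1}. c + \<delta> \<le> x} R"
      using c \<delta> by (intro contR) auto
  qed (use \<delta> in \<open>auto simp: lin1_def intro: continuous_intros\<close>)
  have LR: "L (c - \<delta>) \<le> R c" "L c \<le> R (c + \<delta>)"
    using Lneg[of "c - \<delta>"] Lneg[of c] Rpos[of c] Rpos[of "c + \<delta>"] c \<delta> by auto
  have sand: "\<phi>1 t \<le> Gfun c t \<and> Gfun c t \<le> \<phi>2 t" if t: "t \<in> {0..1}" for t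
  proof -
    have G: "Gfun c t = (if t < c then L t else R t)" by (simp add: Gfun_def L_def R_def)
    have lin2_ge: "lin2 t \<ge> L (c - \<delta>)" if "t \<ge> c - \<delta>"
      unfolding lin2_def using that LR \<delta> by (intro add_increasing2 divide_nonneg_pos mult_nonneg_nonneg) auto
    have lin1_le: "lin1 t \<le> R (c + \<delta>)" if "t \<le> c + \<delta>"
    proof -
      have "(R (c + \<delta>) - L c) * (t - c) / \<delta> \<le> (R (c + \<delta>) - L c) * \<delta> / \<delta>"
        using that LR \<delta> by (intro divide_right_mono mult_left_mono) auto
      then show ?thesis using \<delta> by (simp add: lin1_def)
    qed
    have "\<phi>2 t \<ge> Gfun c t"
    proof (cases "t \<le> c - \<delta>")
      case True then show ?thesis using \<delta> by (simp add: \<phi>2_def G)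
    next
      case False
      show ?thesis
      proof (cases "t < c")
        case True
        then have "L t \<le> L (c - \<delta>)" using False c by (intro Lmono) auto
        then show ?thesis using True False lin2_ge by (simp add: \<phi>2_def G)
      next
        case False2: False
        show ?thesis
        proof (cases "t = c")
          case True
          have "lin2 c = R c" using \<delta> by (simp add: lin2_def)
          moreover have "Gfun c c = R c" by (simp add: Gfun_def R_def)
          ultimately show ?thesis using True \<delta> by (simp add: \<phi>2_def)
        qed (use False2 in \<open>simp add: \<phi>2_def G\<close>)
      qed
    qed
    moreover have "\<phi>1 t \<le> Gfun c t"
    proof (cases "t < c")
      case True then show ?thesis using \<delta> by (simp add: \<phi>1_def G)
    next
      case False
      show ?thesis
      proof (cases "t = c")
        case True
        have "Gfun c c = R c" by (simp add: Gfun_def R_def)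
        then show ?thesis using True \<delta> LR Lneg[of c] Rpos[of c] c by (simp add: \<phi>1_def)
      next
        case False2: False
        show ?thesis
        proof (cases "t \<le> c + \<delta>")
          case True
          then have "R (c + \<delta>) \<le> R t" using False False2 c by (intro Rmono) auto
          then show ?thesis using True False False2 lin1_le by (simp add: \<phi>1_def G)
        qed (use False in \<open>simp add: \<phi>1_def G\<close>)
      qed
    qed
    ultimately show ?thesis by simp
  qed
  have diff: "\<phi>2 t - \<phi>1 t \<le> (if t \<in> {c - \<delta>..c + \<delta>} then J else 0)" if t: "t \<in> {0..1}" for t
  proof -
    have lin2_le: "lin2 t \<le> R c" if "t \<le> c"
    proof -
      have "(R c - L (c - \<delta>)) * (t - (c - \<delta>)) / \<delta> \<le> (R c - L (c - \<delta>)) * \<delta> / \<delta>"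
        using that LR \<delta> by (intro divide_right_mono mult_left_mono) auto
      then show ?thesis using \<delta> by (simp add: lin2_def)
    qed
    have lin1_ge: "lin1 t \<ge> L c" if "t \<ge> c"
      unfolding lin1_def using that LR \<delta> by (intro add_increasing2 divide_nonneg_pos mult_nonneg_nonneg) auto
    consider "t \<le> c - \<delta>" | "c - \<delta> < t" "t \<le> c" | "c < t" "t \<le> c + \<delta>" | "c + \<delta> < t" by linarith
    then show ?thesis
    proof cases
      case 1 then show ?thesis using \<delta> Jpos by (simp add: \<phi>1_def \<phi>2_def)
    next
      case 2
      then have "L c \<le> L t" using c by (intro Lmono) auto
      then show ?thesis using 2 lin2_le \<delta> by (simp add: \<phi>1_def \<phi>2_def J_def)
    next
      case 3
      then have "R t \<le> R c" using c by (intro Rmono) auto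
      then show ?thesis using 3 lin1_ge \<delta> by (simp add: \<phi>1_def \<phi>2_def J_def)
    next
      case 4 then show ?thesis using \<delta> Jpos by (simp add: \<phi>1_def \<phi>2_def)
    qed
  qed
  obtain a1 N1 a2 N2 where P: "\<And>t. t\<in>{0..1} \<Longrightarrow> pv a1 N1 t \<le> Gfun c t \<and> Gfun c t \<le> pv a2 N2 t"
    "\<And>t. t\<in>{0..1} \<Longrightarrow> pv a2 N2 t - pv a1 N1 t \<le> \<phi>2 t - \<phi>1 t + 4 * \<eta>"
    using sandwich_poly[OF cont1 cont2 sand \<eta>] by blast
  have int1: "((\<lambda>t. pv a2 N2 t - pv a1 N1 t) has_integral (Lam a2 N2 - Lam a1 N1)) {0..1}"
    unfolding Lam_def by (intro has_integral_diff pv_has_integral)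
  have sub: "{c - \<delta>..c + \<delta>} \<subseteq> {0..1}" using \<delta> by auto
  have "((\<lambda>t. J) has_integral (2 * \<delta> * J)) {c - \<delta>..c + \<delta>}"
    using has_integral_const_real[of J "c - \<delta>" "c + \<delta>"] \<delta> by (simp add: content_real)
  then have "((\<lambda>t. if t \<in> {c - \<delta>..c + \<delta>} then J else 0) has_integral (2 * \<delta> * J)) {0..1}"
    by (subst has_integral_restrict[OF sub])
  then have int2: "((\<lambda>t. (if t \<in> {c - \<delta>..c + \<delta>} then J else 0) + 4 * \<eta>) has_integral (2 * \<delta> * J + 4 * \<eta>)) {0..1}"
    using has_integral_const_real[of "4 * \<eta>" 0 1] by (intro has_integral_add) auto
  have "Lam a2 N2 - Lam a1 N1 \<le> 2 * \<delta> * J + 4 * \<eta>"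
    by (rule has_integral_le[OF int1 int2]) (use P(2) diff in force)
  also have "\<dots> < \<epsilon>" using \<delta> \<epsilon> by (simp add: \<eta>_def)
  finally show ?thesis using that P(1) by blast
qed

lemma pv_rpf: "real_polynomial_function (pv a N)"
  unfolding real_polynomial_function_iff_sum pv_def by blast

lemma rpf_pv: assumes "real_polynomial_function f" obtains b M where "f = pv b M"
  using assms unfolding real_polynomial_function_iff_sum pv_def by blast

lemma xpow_lt1: "0 < (x::real) \<Longrightarrow> x < 1 \<Longrightarrow> x * x ^ i < 1"
  using power_Suc_less_one[of x i] by simp

lemma pow_to_left:
  "filterlim (\<lambda>x::real. x ^ Suc i) (at_left 1) (at_left 1)"
proof (rule tendsto_imp_filterlim_at_left)
  show "((\<lambda>x::real. x ^ Suc i) \<longlongrightarrow> 1) (at_left 1)"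
    by (rule tendsto_eq_intros refl | simp)+
  show "eventually (\<lambda>x::real. x ^ Suc i < 1) (at_left 1)"
    using eventually_at_left_real[of 0 "1::real", OF zero_less_one]
    by eventually_elim (auto intro: xpow_lt1)
qed

lemma polyzero_lim:
  fixes a :: "nat \<Rightarrow> real"
  assumes conv: "\<And>x::real. \<bar>x\<bar> < 1 \<Longrightarrow> summable (\<lambda>n. a n * x ^ n)"
    and lim: "((\<lambda>x. \<Sum>n. a n * x ^ n) \<longlongrightarrow> 0) (at_left 1)"
  shows "((\<lambda>x. \<Sum>n. a n * (x ^ n * pv b M (x ^ n))) \<longlongrightarrow> 0) (at_left (1::real))"
proof -
  have ev: "eventually (\<lambda>x. (\<Sum>i\<le>M. b i * (\<Sum>n. a n * (x ^ Suc i) ^ n)) =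
        (\<Sum>n. a n * (x ^ n * pv b M (x ^ n)))) (at_left (1::real))"
    using eventually_at_left_real[of 0 "1::real", OF zero_less_one]
  proof eventually_elim
    case (elim x)
    then have x: "0 < x" "x < 1" by auto
    have s: "summable (\<lambda>n. a n * (x ^ Suc i) ^ n)" for i
      using x xpow_lt1[of x i] by (intro conv) (simp add: abs_of_pos)
    have "(\<Sum>n. a n * (x ^ n * pv b M (x ^ n))) = (\<Sum>n. \<Sum>i\<le>M. b i * (a n * (x ^ Suc i) ^ n))"
    proof (intro suminf_cong)
      fix n
      have "x ^ n * (x ^ n) ^ i = (x ^ Suc i) ^ n" for i using pow_mono_rewrite by simp
      then show "a n * (x ^ n * pv b M (x ^ n)) = (\<Sum>i\<le>M. b i * (a n * (x ^ Suc i) ^ n))"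
        unfolding pv_def by (simp add: sum_distrib_left mult_ac)
    qed
    also have "\<dots> = (\<Sum>i\<le>M. \<Sum>n. b i * (a n * (x ^ Suc i) ^ n))"
      by (rule suminf_sum) (intro summable_mult s)
    also have "\<dots> = (\<Sum>i\<le>M. b i * (\<Sum>n. a n * (x ^ Suc i) ^ n))"
      by (intro sum.cong refl suminf_mult s)
    finally show ?case by simp
  qed
  have "((\<lambda>x. \<Sum>n. a n * (x ^ Suc i) ^ n) \<longlongrightarrow> 0) (at_left (1::real))" for i
    using filterlim_compose[OF lim pow_to_left[of i]] by (simp add: o_def)
  then have "((\<lambda>x. (\<Sum>i\<le>M. b i * (\<Sum>n. a n * (x ^ Suc i) ^ n))) \<longlongrightarrow> (\<Sum>i\<le>M. b i * 0)) (at_left (1::real))"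
    by (intro tendsto_sum tendsto_mult tendsto_const)
  then show ?thesis using ev by (simp add: Lim_transform_eventually)
qed

lemma one_minus_pow_le: assumes "0 \<le> (x::real)" "x \<le> 1" shows "1 - x ^ n \<le> real n * (1 - x)"
proof -
  have "(\<Sum>i<n. x ^ i) \<le> (\<Sum>i<n. 1)" using assms by (intro sum_mono power_le_one) auto
  then have "(1 - x) * (\<Sum>i<n. x ^ i) \<le> (1 - x) * real n" using assms by (intro mult_left_mono) auto
  then show ?thesis by (simp add: one_diff_power_eq mult.commute)
qed

lemma summable_xpv:
  assumes "0 \<le> (x::real)" "x < 1"
  shows "summable (\<lambda>n. x ^ n * pv a N (x ^ n))"
proof -
  have "summable (\<lambda>n. \<Sum>i\<le>N. a i * (x ^ n * (x ^ n) ^ i))"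
    by (intro summable_sum summable_mult summable_mono_pow assms)
  then show ?thesis unfolding pv_def by (simp add: sum_distrib_left mult_ac)
qed

lemma summable_apv:
  fixes a :: "nat \<Rightarrow> real"
  assumes conv: "\<And>x::real. \<bar>x\<bar> < 1 \<Longrightarrow> summable (\<lambda>n. a n * x ^ n)"
    and x: "0 < (x::real)" "x < 1"
  shows "summable (\<lambda>n. a n * (x ^ n * pv b M (x ^ n)))"
proof -
  have s: "summable (\<lambda>n. a n * (x ^ Suc i) ^ n)" for i
    using x xpow_lt1[of x i] by (intro conv) (simp add: abs_of_pos)
  have "summable (\<lambda>n. \<Sum>i\<le>M. b i * (a n * (x ^ Suc i) ^ n))"
    by (intro summable_sum summable_mult s)
  moreover have "(\<Sum>i\<le>M. b i * (a n * (x ^ Suc i) ^ n)) = a n * (x ^ n * pv b M (x ^ n))" for n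
  proof -
    have "x ^ n * (x ^ n) ^ i = (x ^ Suc i) ^ n" for i using pow_mono_rewrite by simp
    then show ?thesis unfolding pv_def by (simp add: sum_distrib_left mult_ac)
  qed
  ultimately show ?thesis by simp
qed

lemma HL0:
  fixes a :: "nat \<Rightarrow> real"
  assumes conv: "\<And>x::real. \<bar>x\<bar> < 1 \<Longrightarrow> summable (\<lambda>n. a n * x ^ n)"
    and lim: "((\<lambda>x. \<Sum>n. a n * x ^ n) \<longlongrightarrow> 0) (at_left 1)"
    and K: "\<And>n. n \<ge> 1 \<Longrightarrow> real n * a n \<ge> - K" and K0: "K \<ge> 0"
  shows "(\<lambda>N. \<Sum>n\<le>N. a n) \<longlonglongrightarrow> 0"
proof -
  define c where "c = exp (- 1 :: real)"
  have c: "0 < c" "c < 1" by (auto simp: c_def)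
  define g where "g = (\<lambda>t::real. if c \<le> t then 1 else (0::real))"
  define h where "h = (\<lambda>x. \<Sum>n. a n * g (x ^ n))"
  have fin: "finite {n. c \<le> x ^ n}" if x: "0 \<le> x" "x < 1" for x
  proof -
    have "(\<lambda>n. x ^ n) \<longlonglongrightarrow> 0" using x by (intro LIMSEQ_power_zero) simp
    then have "eventually (\<lambda>n. x ^ n < c) sequentially" using c by (intro order_tendstoD) auto
    then obtain M where M: "\<And>n. n \<ge> M \<Longrightarrow> x ^ n < c" by (auto simp: eventually_sequentially)
    have "{n. c \<le> x ^ n} \<subseteq> {..<M}" using M by (auto simp: not_le[symmetric])
    then show ?thesis by (rule finite_subset) simp
  qed
  have sumh: "summable (\<lambda>n. a n * g (x ^ n))" if x: "0 \<le> x" "x < 1" for x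
    by (rule summable_finite[OF fin[OF x]]) (auto simp: g_def)
  have main: "(h \<longlongrightarrow> 0) (at_left 1)"
  proof (rule tendstoI)
    fix \<epsilon> :: real assume \<epsilon>: "\<epsilon> > 0"
    define \<epsilon>' where "\<epsilon>' = \<epsilon> / (2 * K + 2)"
    have \<epsilon>': "\<epsilon>' > 0" "K * \<epsilon>' \<le> \<epsilon> / 2" using \<epsilon> K0 by (auto simp: \<epsilon>'_def field_simps)
    obtain a1 N1 a2 N2 where sand: "\<And>t. t\<in>{0..1} \<Longrightarrow> pv a1 N1 t \<le> Gfun c t \<and> Gfun c t \<le> pv a2 N2 t"
      and lam: "Lam a2 N2 - Lam a1 N1 < \<epsilon>'"
      using Gfun_approx[OF c \<epsilon>'(1)] by blast
    define w where "w = (\<lambda>t. pv a2 N2 t - pv a1 N1 t)"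
    have "real_polynomial_function (\<lambda>y. 1 + (1 - y) * pv a2 N2 y)"
      by (rule real_polynomial_function.intros(3) real_polynomial_function.intros(2) real_polynomial_function.intros(4)
          real_polynomial_function_diff real_polynomial_function.intros(1) bounded_linear_ident pv_rpf)+
    then obtain b2 M2 where b2: "pv b2 M2 = (\<lambda>y. 1 + (1 - y) * pv a2 N2 y)" by (rule rpf_pv) auto
    have "real_polynomial_function (\<lambda>y. 1 + (1 - y) * pv a1 N1 y)"
      by (rule real_polynomial_function.intros(3) real_polynomial_function.intros(2) real_polynomial_function.intros(4)
          real_polynomial_function_diff real_polynomial_function.intros(1) bounded_linear_ident pv_rpf)+
    then obtain b1 M1 where b1: "pv b1 M1 = (\<lambda>y. 1 + (1 - y) * pv a1 N1 y)" by (rule rpf_pv) auto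
    have gform: "g t = t * (1 + (1 - t) * Gfun c t)" if t: "t \<in> {0..1}" for t
    proof (cases "t < c")
      case True then show ?thesis using c by (auto simp: g_def Gfun_def)
    next
      case False then have "t > 0" using c by auto
      then show ?thesis using False by (auto simp: g_def Gfun_def field_simps)
    qed
    have gP: "g t \<le> t * pv b2 M2 t" "t * pv b1 M1 t \<le> g t"
      "t * pv b2 M2 t - t * pv b1 M1 t = t * (1 - t) * w t" "w t \<ge> 0" if t: "t \<in> {0..1}" for t
    proof -
      have tt: "t * (1 - t) \<ge> 0" using t by auto
      have "t * (1 - t) * Gfun c t \<le> t * (1 - t) * pv a2 N2 t"
        using sand[OF t] tt by (intro mult_left_mono) auto
      then show "g t \<le> t * pv b2 M2 t" unfolding gform[OF t] b2 by (simp add: algebra_simps)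
      have "t * (1 - t) * pv a1 N1 t \<le> t * (1 - t) * Gfun c t"
        using sand[OF t] tt by (intro mult_left_mono) auto
      then show "t * pv b1 M1 t \<le> g t" unfolding gform[OF t] b1 by (simp add: algebra_simps)
      show "t * pv b2 M2 t - t * pv b1 M1 t = t * (1 - t) * w t"
        unfolding b1 b2 w_def by (simp add: algebra_simps)
      show "w t \<ge> 0" using sand[OF t] by (auto simp: w_def)
    qed
    have l1: "((\<lambda>x. \<Sum>n. a n * (x ^ n * pv b2 M2 (x ^ n))) \<longlongrightarrow> 0) (at_left (1::real))"
      by (rule polyzero_lim[OF conv lim])
    have l2: "((\<lambda>x. \<Sum>n. a n * (x ^ n * pv b1 M1 (x ^ n))) \<longlongrightarrow> 0) (at_left (1::real))"
      by (rule polyzero_lim[OF conv lim])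
    have l3: "((\<lambda>x. (1 - x) * (\<Sum>n. x ^ n * pv a2 N2 (x ^ n)) - (1 - x) * (\<Sum>n. x ^ n * pv a1 N1 (x ^ n)))
        \<longlongrightarrow> Lam a2 N2 - Lam a1 N1) (at_left (1::real))"
      unfolding Lam_def by (intro tendsto_diff poly_abel_lim)
    have e1: "eventually (\<lambda>x. \<bar>\<Sum>n. a n * (x ^ n * pv b2 M2 (x ^ n))\<bar> < \<epsilon> / 4) (at_left (1::real))"
      using tendstoD[OF l1, of "\<epsilon> / 4"] \<epsilon> by (simp add: dist_real_def)
    have e2: "eventually (\<lambda>x. \<bar>\<Sum>n. a n * (x ^ n * pv b1 M1 (x ^ n))\<bar> < \<epsilon> / 4) (at_left (1::real))"
      using tendstoD[OF l2, of "\<epsilon> / 4"] \<epsilon> by (simp add: dist_real_def)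
    have e3: "eventually (\<lambda>x. (1 - x) * (\<Sum>n. x ^ n * pv a2 N2 (x ^ n)) - (1 - x) * (\<Sum>n. x ^ n * pv a1 N1 (x ^ n)) < \<epsilon>') (at_left (1::real))"
      using order_tendstoD(2)[OF l3 lam] .
    show "eventually (\<lambda>x. dist (h x) 0 < \<epsilon>) (at_left 1)"
      using e1 e2 e3 eventually_at_left_real[of 0 "1::real", OF zero_less_one]
    proof eventually_elim
      case (elim x)
      then have x: "0 < x" "x < 1" by auto
      define D where "D = (1 - x) * (\<Sum>n. x ^ n * w (x ^ n))"
      have sw: "summable (\<lambda>n. x ^ n * w (x ^ n))"
        unfolding w_def right_diff_distrib using x by (intro summable_diff summable_xpv) auto
      have D_eq: "D = (1 - x) * (\<Sum>n. x ^ n * pv a2 N2 (x ^ n)) - (1 - x) * (\<Sum>n. x ^ n * pv a1 N1 (x ^ n))"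
      proof -
        have "(\<Sum>n. x ^ n * w (x ^ n)) = (\<Sum>n. x ^ n * pv a2 N2 (x ^ n)) - (\<Sum>n. x ^ n * pv a1 N1 (x ^ n))"
          unfolding w_def right_diff_distrib using x by (intro suminf_diff[symmetric] summable_xpv) auto
        then show ?thesis unfolding D_def by (simp only: right_diff_distrib)
      qed
      have xn: "x ^ n \<in> {0..1}" for n using x by (auto intro: power_le_one)
      have D0: "D \<ge> 0" unfolding D_def using x xn gP(4)
        by (intro mult_nonneg_nonneg suminf_nonneg sw) auto
      have Dl: "D < \<epsilon>'" using elim(3) D_eq by simp
      have trm: "a n * g (x ^ n) \<le> a n * (x ^ n * pv b2 M2 (x ^ n)) + K * ((1 - x) * (x ^ n * w (x ^ n)))
          \<and> a n * (x ^ n * pv b1 M1 (x ^ n)) - K * ((1 - x) * (x ^ n * w (x ^ n))) \<le> a n * g (x ^ n)" for n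
      proof (cases "n = 0")
        case True
        have "w 1 \<ge> 0" using gP(4)[of 1] by simp
        then have "K * ((1 - x) * w 1) \<ge> 0" using K0 x by simp
        moreover have "g 1 = 1" using c by (simp add: g_def)
        ultimately show ?thesis using True by (simp add: b1 b2)
      next
        case False
        define y where "y = x ^ n"
        have y: "y \<in> {0..1}" unfolding y_def by (rule xn)
        have an: "a n \<ge> - K / real n" using K[of n] False by (simp add: field_simps)
        have bern: "1 - y \<le> real n * (1 - x)" unfolding y_def using x by (intro one_minus_pow_le) auto
        have wy: "w y \<ge> 0" using gP(4)[OF y] .
        have key: "K / real n * (y * (1 - y) * w y) \<le> K * ((1 - x) * (y * w y))"
        proof -
          have "y * (1 - y) * w y \<le> y * (real n * (1 - x)) * w y"
            using y wy bern by (intro mult_right_mono mult_left_mono) auto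
          then have "K / real n * (y * (1 - y) * w y) \<le> K / real n * (y * (real n * (1 - x)) * w y)"
            using K0 by (intro mult_left_mono) auto
          also have "\<dots> = K * ((1 - x) * (y * w y))" using False by (simp add: field_simps)
          finally show ?thesis .
        qed
        have u1: "a n * (y * pv b2 M2 y - g y) \<ge> - K / real n * (y * pv b2 M2 y - g y)"
          using an gP(1)[OF y] by (intro mult_right_mono) auto
        have u2: "K / real n * (y * pv b2 M2 y - g y) \<le> K / real n * (y * (1 - y) * w y)"
          using gP(2)[OF y] gP(3)[OF y] K0 by (intro mult_left_mono) auto
        have l1': "a n * (g y - y * pv b1 M1 y) \<ge> - K / real n * (g y - y * pv b1 M1 y)"
          using an gP(2)[OF y] by (intro mult_right_mono) auto
        have l2': "K / real n * (g y - y * pv b1 M1 y) \<le> K / real n * (y * (1 - y) * w y)"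
          using gP(1)[OF y] gP(3)[OF y] K0 by (intro mult_left_mono) auto
        show ?thesis using u1 u2 l1' l2' key unfolding y_def[symmetric]
          by (simp add: algebra_simps)
      qed
      have sK: "summable (\<lambda>n. K * ((1 - x) * (x ^ n * w (x ^ n))))"
        by (intro summable_mult sw)
      have s2: "summable (\<lambda>n. a n * (x ^ n * pv b2 M2 (x ^ n)))" by (rule summable_apv[OF conv x])
      have s1: "summable (\<lambda>n. a n * (x ^ n * pv b1 M1 (x ^ n)))" by (rule summable_apv[OF conv x])
      have KD: "(\<Sum>n. K * ((1 - x) * (x ^ n * w (x ^ n)))) = K * D"
        unfolding D_def by (simp add: suminf_mult sw summable_mult)
      have "h x \<le> (\<Sum>n. a n * (x ^ n * pv b2 M2 (x ^ n)) + K * ((1 - x) * (x ^ n * w (x ^ n))))"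
        unfolding h_def using trm x by (intro suminf_le summable_add sumh s2 sK) auto
      also have "\<dots> = (\<Sum>n. a n * (x ^ n * pv b2 M2 (x ^ n))) + K * D"
        using KD by (simp add: suminf_add[OF s2 sK, symmetric])
      finally have hu: "h x \<le> (\<Sum>n. a n * (x ^ n * pv b2 M2 (x ^ n))) + K * D" .
      have "(\<Sum>n. a n * (x ^ n * pv b1 M1 (x ^ n))) - K * D = (\<Sum>n. a n * (x ^ n * pv b1 M1 (x ^ n)) - K * ((1 - x) * (x ^ n * w (x ^ n))))"
        using KD by (simp add: suminf_diff[OF s1 sK, symmetric])
      also have "\<dots> \<le> h x"
        unfolding h_def using trm x by (intro suminf_le summable_diff sumh s1 sK) auto
      finally have hl: "(\<Sum>n. a n * (x ^ n * pv b1 M1 (x ^ n))) - K * D \<le> h x" .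
      have "K * D \<le> K * \<epsilon>'" using K0 Dl by (intro mult_left_mono) auto
      moreover have "K * D \<ge> 0" using K0 D0 by simp
      moreover have "- (\<epsilon> / 4) < (\<Sum>n. a n * (x ^ n * pv b2 M2 (x ^ n)))" "(\<Sum>n. a n * (x ^ n * pv b2 M2 (x ^ n))) < \<epsilon> / 4"
        using elim(1) by (simp_all only: abs_less_iff) linarith+
      moreover have "- (\<epsilon> / 4) < (\<Sum>n. a n * (x ^ n * pv b1 M1 (x ^ n)))" "(\<Sum>n. a n * (x ^ n * pv b1 M1 (x ^ n))) < \<epsilon> / 4"
        using elim(2) by (simp_all only: abs_less_iff) linarith+
      ultimately have "- \<epsilon> < h x" "h x < \<epsilon>" using hu hl \<epsilon>' \<epsilon> by linarith+
      then show ?case by (simp add: dist_real_def abs_less_iff)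
    qed
  qed
  define xs where "xs = (\<lambda>N::nat. exp (- 1 / real N))"
  have xs_lim: "filterlim xs (at_left 1) sequentially"
  proof (rule tendsto_imp_filterlim_at_left)
    have "(\<lambda>N. - (1 / real N)) \<longlonglongrightarrow> - 0"
      by (intro tendsto_minus lim_inverse_n')
    then have "(\<lambda>N. exp (- (1 / real N))) \<longlonglongrightarrow> exp (- 0)"
      by (rule tendsto_exp)
    then show "xs \<longlonglongrightarrow> 1" by (simp add: xs_def)
    show "eventually (\<lambda>N. xs N < 1) sequentially"
      using eventually_ge_at_top[of "1::nat"] by eventually_elim (auto simp: xs_def)
  qed
  have "(\<lambda>N. h (xs N)) \<longlonglongrightarrow> 0" by (rule filterlim_compose[OF main xs_lim])
  moreover have "eventually (\<lambda>N. h (xs N) = (\<Sum>n\<le>N. a n)) sequentially"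
    using eventually_ge_at_top[of "1::nat"]
  proof eventually_elim
    case (elim N)
    have g_eq: "g (xs N ^ n) = (if n \<le> N then 1 else 0)" for n
    proof -
      have "xs N ^ n = exp (- real n / real N)" unfolding xs_def by (simp add: exp_of_nat_mult[symmetric])
      moreover have "(exp (-1) \<le> exp (- real n / real N)) \<longleftrightarrow> n \<le> N" using elim by (simp add: field_simps)
      ultimately show ?thesis by (simp add: g_def c_def)
    qed
    have "h (xs N) = (\<Sum>n\<in>{..N}. a n * g (xs N ^ n))"
      unfolding h_def by (rule suminf_finite) (auto simp: g_eq)
    then show ?case by (simp add: g_eq)
  qed
  ultimately show ?thesis by (rule Lim_transform_eventually)
qed

theorem HL:
  fixes a :: "nat \<Rightarrow> real"
  assumes conv: "\<And>x::real. \<bar>x\<bar> < 1 \<Longrightarrow> summable (\<lambda>n. a n * x ^ n)"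
    and lim: "((\<lambda>x. \<Sum>n. a n * x ^ n) \<longlongrightarrow> s) (at_left 1)"
    and K: "\<And>n. n \<ge> 1 \<Longrightarrow> real n * a n \<ge> - K"
  shows "(\<lambda>N. \<Sum>n\<le>N. a n) \<longlonglongrightarrow> s"
proof -
  define a' where "a' = (\<lambda>n. a n - (if n = 0 then s else 0))"
  have sm: "summable (\<lambda>n. (if n = 0 then s else 0) * x ^ n)" for x :: real
    by (rule summable_finite[of "{0}"]) auto
  have sm0: "(\<Sum>n. (if n = 0 then s else 0) * x ^ n) = s" for x :: real
    by (subst suminf_finite[of "{0}"]) auto
  have conv': "summable (\<lambda>n. a' n * x ^ n)" if "\<bar>x\<bar> < 1" for x :: real
    unfolding a'_def left_diff_distrib by (intro summable_diff conv that sm)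
  have "((\<lambda>x. \<Sum>n. a' n * x ^ n) \<longlongrightarrow> 0) (at_left 1)"
  proof -
    have "eventually (\<lambda>x. (\<Sum>n. a n * x ^ n) - s = (\<Sum>n. a' n * x ^ n)) (at_left (1::real))"
      using eventually_at_left_real[of 0 "1::real", OF zero_less_one]
    proof eventually_elim
      case (elim x)
      then have "\<bar>x\<bar> < 1" by auto
      have "(\<Sum>n. a n * x ^ n - (if n = 0 then s else 0) * x ^ n) = (\<Sum>n. a n * x ^ n) - (\<Sum>n. (if n = 0 then s else 0) * x ^ n)"
        by (rule suminf_diff[OF conv[OF \<open>\<bar>x\<bar> < 1\<close>] sm, symmetric])
      then show ?case unfolding a'_def left_diff_distrib by (simp add: sm0)
    qed
    moreover have "((\<lambda>x. (\<Sum>n. a n * x ^ n) - s) \<longlongrightarrow> 0) (at_left 1)"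
      using tendsto_diff[OF lim tendsto_const[of s]] by simp
    ultimately show ?thesis by (rule Lim_transform_eventually[rotated])
  qed
  moreover have "real n * a' n \<ge> - max K 0" if "n \<ge> 1" for n
    using K[OF that] that by (simp add: a'_def)
  ultimately have "(\<lambda>N. \<Sum>n\<le>N. a' n) \<longlonglongrightarrow> 0"
    by (intro HL0[OF conv']) auto
  moreover have "(\<Sum>n\<le>N. a' n) = (\<Sum>n\<le>N. a n) - s" for N
    by (simp add: a'_def sum_subtractf sum.delta)
  ultimately have "(\<lambda>N. (\<Sum>n\<le>N. a n) - s) \<longlonglongrightarrow> 0" by simp
  then show ?thesis by (simp add: LIM_zero_iff)
qed

definition Wt :: "nat \<Rightarrow> nat \<Rightarrow> real" where
  "Wt p k = real ((k + p) choose p)"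

lemma Wt_nonneg: "Wt p k \<ge> 0" by (simp add: Wt_def)
lemma Wt_0 [simp]: "Wt p 0 = 1" by (simp add: Wt_def)
lemma Wt_zero_p [simp]: "Wt 0 k = 1" by (simp add: Wt_def)

lemma hockey: "(\<Sum>i\<le>k. Wt p i) = Wt (Suc p) k"
proof (induction k)
  case 0 then show ?case by simp
next
  case (Suc k)
  have "((Suc k + Suc p) choose Suc p) = ((k + Suc p) choose p) + ((k + Suc p) choose Suc p)"
    using binomial_Suc_Suc[of "k + Suc p" p] by simp
  then have "Wt (Suc p) (Suc k) = Wt p (Suc k) + Wt (Suc p) k" unfolding Wt_def by simp
  then show ?case using Suc by simp
qed

lemma sum_tri_swap:
  fixes f :: "nat \<Rightarrow> nat \<Rightarrow> 'a::comm_monoid_add"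
  shows "(\<Sum>k\<le>n. \<Sum>i\<le>n-k. f k i) = (\<Sum>i\<le>n. \<Sum>k\<le>n-i. f k i)"
proof -
  have 1: "(\<Sum>i\<le>n-k. f k i) = (\<Sum>i\<le>n. if k + i \<le> n then f k i else 0)" if "k \<le> n" for k
  proof -
    have "{i \<in> {..n}. k + i \<le> n} = {..n-k}" using that by auto
    then show ?thesis by (simp add: sum.inter_filter[symmetric])
  qed
  have 2: "(\<Sum>k\<le>n-i. f k i) = (\<Sum>k\<le>n. if k + i \<le> n then f k i else 0)" if "i \<le> n" for i
  proof -
    have "{k \<in> {..n}. k + i \<le> n} = {..n-i}" using that by auto
    then show ?thesis by (simp add: sum.inter_filter[symmetric])
  qed
  have "(\<Sum>k\<le>n. \<Sum>i\<le>n-k. f k i) = (\<Sum>k\<le>n. \<Sum>i\<le>n. if k + i \<le> n then f k i else 0)"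
    by (rule sum.cong[OF refl], rule 1) simp
  also have "\<dots> = (\<Sum>i\<le>n. \<Sum>k\<le>n. if k + i \<le> n then f k i else 0)" by (rule sum.swap)
  also have "\<dots> = (\<Sum>i\<le>n. \<Sum>k\<le>n-i. f k i)"
    by (rule sum.cong[OF refl], rule 2[symmetric]) simp
  finally show ?thesis .
qed

lemma powser_cauchy:
  fixes a b :: "nat \<Rightarrow> real"
  assumes a: "summable (\<lambda>n. norm (a n * r ^ n))" and b: "summable (\<lambda>n. norm (b n * r ^ n))"
  shows "(\<lambda>n. (\<Sum>i\<le>n. a i * b (n - i)) * r ^ n) sums ((\<Sum>n. a n * r ^ n) * (\<Sum>n. b n * r ^ n))"
    and "summable (\<lambda>n. norm ((\<Sum>i\<le>n. a i * b (n - i)) * r ^ n))"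
proof -
  have eq: "(\<Sum>i\<le>n. a i * b (n - i)) * r ^ n = (\<Sum>i\<le>n. (a i * r ^ i) * (b (n - i) * r ^ (n - i)))" for n
    unfolding sum_distrib_right
    by (intro sum.cong refl) (simp add: power_add[symmetric] algebra_simps)
  show "(\<lambda>n. (\<Sum>i\<le>n. a i * b (n - i)) * r ^ n) sums ((\<Sum>n. a n * r ^ n) * (\<Sum>n. b n * r ^ n))"
    unfolding eq by (rule Cauchy_product_sums[OF a b])
  have "(\<lambda>n. \<Sum>i\<le>n. norm (a i * r ^ i) * norm (b (n - i) * r ^ (n - i))) sums
      ((\<Sum>n. norm (a n * r ^ n)) * (\<Sum>n. norm (b n * r ^ n)))"
    using Cauchy_product_sums[of "\<lambda>n. norm (a n * r ^ n)" "\<lambda>n. norm (b n * r ^ n)"] a b by simp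
  then have s: "summable (\<lambda>n. \<Sum>i\<le>n. norm (a i * r ^ i) * norm (b (n - i) * r ^ (n - i)))"
    by (rule sums_summable)
  show "summable (\<lambda>n. norm ((\<Sum>i\<le>n. a i * b (n - i)) * r ^ n))"
  proof (rule summable_comparison_test'[OF s])
    fix n
    have "norm ((\<Sum>i\<le>n. a i * b (n - i)) * r ^ n) \<le> (\<Sum>i\<le>n. norm ((a i * r ^ i) * (b (n - i) * r ^ (n - i))))"
      unfolding eq by (rule norm_sum)
    then show "norm (norm ((\<Sum>i\<le>n. a i * b (n - i)) * r ^ n)) \<le> (\<Sum>i\<le>n. norm (a i * r ^ i) * norm (b (n - i) * r ^ (n - i)))"
      by (simp only: real_norm_def abs_abs abs_mult)
  qed
qed

lemma Wt_gen:
  fixes r :: real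
  assumes "\<bar>r\<bar> < 1"
  shows "(\<lambda>k. Wt p k * r ^ k) sums (1 / (1 - r) ^ Suc p)"
  using assms
proof (induction p arbitrary: r)
  case 0
  then show ?case using geometric_sums[of r] by simp
next
  case (Suc p)
  have absr: "\<bar>\<bar>r\<bar>\<bar> < 1" using Suc.prems by simp
  have a: "summable (\<lambda>n. norm (Wt p n * r ^ n))"
  proof -
    have "summable (\<lambda>k. Wt p k * \<bar>r\<bar> ^ k)" using Suc.IH[OF absr] by (rule sums_summable)
    then show ?thesis by (simp add: abs_mult power_abs abs_of_nonneg Wt_nonneg)
  qed
  have b: "summable (\<lambda>n. norm ((\<lambda>_. 1::real) n * r ^ n))"
    using summable_geometric[of "\<bar>r\<bar>"] Suc.prems by (simp add: power_abs)
  have "(\<lambda>n. (\<Sum>i\<le>n. Wt p i * 1) * r ^ n) sums ((\<Sum>n. Wt p n * r ^ n) * (\<Sum>n. 1 * r ^ n))"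
    using powser_cauchy(1)[OF a b] by simp
  moreover have "(\<Sum>n. Wt p n * r ^ n) = 1 / (1 - r) ^ Suc p" using Suc.IH[OF Suc.prems] by (rule sums_unique[symmetric])
  moreover have "(\<Sum>n. 1 * r ^ n) = 1 / (1 - r)" using Suc.prems by (simp add: suminf_geometric)
  ultimately show ?case by (simp add: hockey)
qed

lemma Wt_absumm:
  fixes r :: real
  assumes "\<bar>r\<bar> < 1"
  shows "summable (\<lambda>k. norm (Wt p k * r ^ k))"
proof -
  have "summable (\<lambda>k. Wt p k * \<bar>r\<bar> ^ k)" using Wt_gen[of "\<bar>r\<bar>" p] assms by (simp add: sums_summable)
  then show ?thesis by (simp add: abs_mult power_abs abs_of_nonneg Wt_nonneg)
qed

definition tt :: "(nat \<Rightarrow> real) \<Rightarrow> nat \<Rightarrow> real" where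
  "tt e n = (\<Sum>i\<le>n. e i)"
definition PP :: "nat \<Rightarrow> (nat \<Rightarrow> real) \<Rightarrow> nat \<Rightarrow> real" where
  "PP p e n = (\<Sum>k\<le>n. Wt p k * tt e (n - k))"
definition QQ :: "nat \<Rightarrow> (nat \<Rightarrow> real) \<Rightarrow> nat \<Rightarrow> real" where
  "QQ p e n = (\<Sum>k\<le>n. Wt p k * (real (n - k) * e (n - k)))"
definition sg :: "nat \<Rightarrow> (nat \<Rightarrow> real) \<Rightarrow> nat \<Rightarrow> real" where
  "sg p e n = PP p e n / Wt (Suc p) n"
definition rho :: "nat \<Rightarrow> nat \<Rightarrow> real" where
  "rho p n = fact (Suc p) * Wt (Suc p) n / real n ^ Suc p"

lemma Wt_pos: "Wt p k > 0" by (simp add: Wt_def)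

lemma cm_gen: "cesaro_mean (Suc p) u n = fact (Suc p) / real n ^ Suc p * (\<Sum>k\<le>n. Wt p k * u (n - k))"
  unfolding cesaro_mean_def Wt_def by (simp add: atLeast0AtMost)

lemma cm_t: "cesaro_mean (Suc p) (tt e) n = fact (Suc p) / real n ^ Suc p * PP p e n"
  unfolding cm_gen PP_def ..

lemma cm_q: "cesaro_mean (Suc p) (\<lambda>k. real k * e k) n = fact (Suc p) / real n ^ Suc p * QQ p e n"
  unfolding cm_gen QQ_def ..

lemma fact_Wt_prod: "fact (Suc p) * Wt (Suc p) n = (\<Prod>i<Suc p. real (n + Suc i))"
proof (induction p)
  case 0 then show ?case by (simp add: Wt_def)
next
  case (Suc p)
  have "Suc (Suc p) * (Suc (n + Suc p) choose Suc (Suc p)) = Suc (n + Suc p) * ((n + Suc p) choose Suc p)"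
    by (rule Suc_times_binomial)
  then have "real (Suc (Suc p)) * Wt (Suc (Suc p)) n = real (n + Suc (Suc p)) * Wt (Suc p) n"
    unfolding Wt_def by (metis add_Suc_right of_nat_mult)
  have "fact (Suc (Suc p)) * Wt (Suc (Suc p)) n = fact (Suc p) * (real (Suc (Suc p)) * Wt (Suc (Suc p)) n)"
    unfolding fact_Suc[of "Suc p"] by (simp only: ac_simps)
  also have "\<dots> = real (n + Suc (Suc p)) * (fact (Suc p) * Wt (Suc p) n)"
    unfolding \<open>real (Suc (Suc p)) * Wt (Suc (Suc p)) n = real (n + Suc (Suc p)) * Wt (Suc p) n\<close>
    by (simp only: ac_simps)
  finally have "fact (Suc (Suc p)) * Wt (Suc (Suc p)) n = real (n + Suc (Suc p)) * (fact (Suc p) * Wt (Suc p) n)" .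
  also have "\<dots> = (\<Prod>i<Suc (Suc p). real (n + Suc i))" using Suc by (simp add: mult.commute)
  finally show ?case .
qed

lemma rho_prod: assumes "n \<ge> 1" shows "rho p n = (\<Prod>i<Suc p. 1 + real (Suc i) / real n)"
proof -
  have "(\<Prod>i<Suc p. 1 + real (Suc i) / real n) = (\<Prod>i<Suc p. real (n + Suc i) / real n)"
    using assms by (intro prod.cong) (auto simp: field_simps)
  also have "\<dots> = (\<Prod>i<Suc p. real (n + Suc i)) / real n ^ Suc p"
    by (simp add: prod_dividef)
  finally show ?thesis unfolding rho_def fact_Wt_prod by simp
qed

lemma rho_ge1: "n \<ge> 1 \<Longrightarrow> rho p n \<ge> 1"
  unfolding rho_prod by (intro prod_ge_1) auto

lemma rho_lim: "rho p \<longlonglongrightarrow> 1"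
proof -
  have "(\<lambda>n. \<Prod>i<Suc p. 1 + real (Suc i) / real n) \<longlonglongrightarrow> (\<Prod>i<Suc p. 1 + 0)"
    by (intro tendsto_prod tendsto_add tendsto_const lim_const_over_n)
  then have "(\<lambda>n. \<Prod>i<Suc p. 1 + real (Suc i) / real n) \<longlonglongrightarrow> 1" by simp
  moreover have "eventually (\<lambda>n. (\<Prod>i<Suc p. 1 + real (Suc i) / real n) = rho p n) sequentially"
    using eventually_ge_at_top[of "1::nat"] by eventually_elim (simp add: rho_prod)
  ultimately show ?thesis by (rule Lim_transform_eventually)
qed

lemma PP_eform: "PP p e n = (\<Sum>j\<le>n. Wt (Suc p) (n - j) * e j)"
proof -
  have "PP p e n = (\<Sum>k\<le>n. \<Sum>i\<le>n-k. Wt p k * e i)"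
    unfolding PP_def tt_def by (simp add: sum_distrib_left)
  also have "\<dots> = (\<Sum>i\<le>n. \<Sum>k\<le>n-i. Wt p k * e i)" by (rule sum_tri_swap)
  also have "\<dots> = (\<Sum>i\<le>n. Wt (Suc p) (n - i) * e i)"
    by (simp add: sum_distrib_right[symmetric] hockey)
  finally show ?thesis .
qed

lemma QQ_eform: "QQ p e n = (\<Sum>j\<le>n. Wt p (n - j) * (real j * e j))"
proof -
  have "QQ p e n = (\<Sum>k\<in>{0..n}. Wt p k * (real (n - k) * e (n - k)))"
    unfolding QQ_def by (simp add: atLeast0AtMost)
  also have "\<dots> = (\<Sum>j\<in>{0..n}. Wt p (n + 0 - j) * (real (n - (n + 0 - j)) * e (n - (n + 0 - j))))"
    by (rule sum.atLeastAtMost_rev)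
  also have "\<dots> = (\<Sum>j\<in>{0..n}. Wt p (n - j) * (real j * e j))"
    by (intro sum.cong refl) auto
  finally show ?thesis by (simp add: atLeast0AtMost)
qed

lemma Wt_rec1: assumes "i \<ge> 1" shows "real i * Wt (Suc p) i = real (i + Suc p) * Wt (Suc p) (i - 1)"
proof -
  have "(i + Suc p - Suc p) * ((i + Suc p) choose Suc p) = (i + Suc p) * ((i + Suc p - 1) choose Suc p)"
    by (rule binomial_absorb_comp)
  moreover have "i + Suc p - 1 = (i - 1) + Suc p" using assms by simp
  ultimately show ?thesis unfolding Wt_def by (metis add_diff_cancel_right' of_nat_mult)
qed

lemma Wt_rec2: "real (Suc p) * Wt (Suc p) i = real (i + Suc p) * Wt p i"
proof -
  have "Suc p * ((i + Suc p) choose Suc p) = (i + Suc p) * ((i + Suc p - 1) choose p)"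
    by (rule binomial_absorption)
  then show ?thesis unfolding Wt_def by (metis add_Suc_right diff_Suc_1 of_nat_mult)
qed

lemma Wt_pointwise:
  assumes "1 \<le> i" "i \<le> n"
  shows "real n * Wt (Suc p) i - real (n + Suc p) * Wt (Suc p) (i - 1) = real (n - i) * Wt p i"
proof -
  define B where "B = Wt (Suc p) i"
  define B' where "B' = Wt (Suc p) (i - 1)"
  define A where "A = Wt p i"
  define c where "c = real i + real (Suc p)"
  have F1: "real i * B = c * B'" using Wt_rec1[OF assms(1), of p] by (simp add: B_def B'_def c_def)
  have F2: "real (Suc p) * B = c * A" using Wt_rec2[of p i] by (simp add: B_def A_def c_def)
  have c: "c > 0" by (simp add: c_def)
  have "c * (real n * B - real (n + Suc p) * B') = real n * c * B - real (n + Suc p) * (c * B')"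
    by (simp add: algebra_simps)
  also have "\<dots> = real n * c * B - real (n + Suc p) * (real i * B)" by (simp add: F1)
  also have "\<dots> = (real (Suc p) * B) * (real n - real i)" by (simp add: c_def algebra_simps)
  also have "\<dots> = (c * A) * (real n - real i)" by (simp only: F2)
  also have "\<dots> = c * (real (n - i) * A)" using assms by (simp add: of_nat_diff)
  finally have "c * (real n * B - real (n + Suc p) * B') = c * (real (n - i) * A)" .
  then show ?thesis using c by (simp add: B_def B'_def A_def)
qed

lemma PP_QQ_identity:
  assumes "n \<ge> 1"
  shows "real n * PP p e n - real (n + Suc p) * PP p e (n - 1) = QQ p e n"
proof -
  obtain n' where n: "n = Suc n'" using assms by (cases n) auto
  have "real n * PP p e n - real (n + Suc p) * PP p e (n - 1) =
      (\<Sum>j\<le>n'. (real n * Wt (Suc p) (n - j) - real (n + Suc p) * Wt (Suc p) (n' - j)) * e j) + real n * e n"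
    unfolding PP_eform n by (simp add: sum_distrib_left sum_subtractf algebra_simps)
  also have "\<dots> = (\<Sum>j\<le>n'. Wt p (n - j) * (real j * e j)) + real n * e n"
  proof -
    have pw: "(real n * Wt (Suc p) (n - j) - real (n + Suc p) * Wt (Suc p) (n' - j)) = real j * Wt p (n - j)"
      if "j \<le> n'" for j
    proof -
      have "n - j - 1 = n' - j" using that n by simp
      moreover have "real (n - (n - j)) = real j" using that n by simp
      ultimately show ?thesis using Wt_pointwise[of "n - j" n p] that n by simp
    qed
    have "(\<Sum>j\<le>n'. (real n * Wt (Suc p) (n - j) - real (n + Suc p) * Wt (Suc p) (n' - j)) * e j)
        = (\<Sum>j\<le>n'. Wt p (n - j) * (real j * e j))"
    proof (rule sum.cong[OF refl])
      fix j assume "j \<in> {..n'}"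
      then have "(real n * Wt (Suc p) (n - j) - real (n + Suc p) * Wt (Suc p) (n' - j)) = real j * Wt p (n - j)"
        by (intro pw) simp
      then show "(real n * Wt (Suc p) (n - j) - real (n + Suc p) * Wt (Suc p) (n' - j)) * e j = Wt p (n - j) * (real j * e j)"
        by simp
    qed
    then show ?thesis by simp
  qed
  also have "\<dots> = QQ p e n" unfolding QQ_eform n by simp
  finally show ?thesis .
qed

lemma sg_diff:
  assumes "n \<ge> 1"
  shows "real n * (sg p e n - sg p e (n - 1)) = QQ p e n / Wt (Suc p) n"
proof -
  have F: "real n * Wt (Suc p) n = real (n + Suc p) * Wt (Suc p) (n - 1)" by (rule Wt_rec1[OF assms])
  have B: "Wt (Suc p) n > 0" "Wt (Suc p) (n - 1) > 0" by (auto simp: Wt_pos)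
  have D: "real n / Wt (Suc p) (n - 1) = real (n + Suc p) / Wt (Suc p) n"
    using B F by (simp add: frac_eq_eq)
  have "real n * (sg p e n - sg p e (n - 1)) = real n * PP p e n / Wt (Suc p) n - (real n / Wt (Suc p) (n - 1)) * PP p e (n - 1)"
    unfolding sg_def by (simp add: algebra_simps)
  also have "\<dots> = real n * PP p e n / Wt (Suc p) n - (real (n + Suc p) / Wt (Suc p) n) * PP p e (n - 1)"
    unfolding D ..
  also have "\<dots> = (real n * PP p e n - real (n + Suc p) * PP p e (n - 1)) / Wt (Suc p) n"
    by (simp add: diff_divide_distrib)
  finally have "real n * (sg p e n - sg p e (n - 1)) = (real n * PP p e n - real (n + Suc p) * PP p e (n - 1)) / Wt (Suc p) n" .
  then show ?thesis using PP_QQ_identity[OF assms] by simp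
qed

lemma abs_summ:
  fixes e :: "nat \<Rightarrow> real"
  assumes conv: "\<And>x::real. \<bar>x\<bar> < 1 \<Longrightarrow> summable (\<lambda>n. e n * x ^ n)" and r: "\<bar>r\<bar> < 1"
  shows "summable (\<lambda>n. norm (e n * r ^ n))"
proof (rule powser_insidea)
  show "summable (\<lambda>n. e n * ((1 + \<bar>r\<bar>) / 2) ^ n)" using r by (intro conv) auto
  show "norm r < norm ((1 + \<bar>r\<bar>) / 2)" using r by auto
qed

lemma tt_gen:
  fixes e :: "nat \<Rightarrow> real"
  assumes conv: "\<And>x::real. \<bar>x\<bar> < 1 \<Longrightarrow> summable (\<lambda>n. e n * x ^ n)" and r: "\<bar>r\<bar> < 1"
  shows "(\<lambda>n. tt e n * r ^ n) sums ((\<Sum>n. e n * r ^ n) / (1 - r))"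
    and "summable (\<lambda>n. norm (tt e n * r ^ n))"
proof -
  have a: "summable (\<lambda>n. norm (e n * r ^ n))" by (rule abs_summ[OF conv r])
  have b: "summable (\<lambda>n. norm ((\<lambda>_. 1::real) n * r ^ n))"
    using summable_geometric[of "\<bar>r\<bar>"] r by (simp add: power_abs)
  have t: "(\<Sum>i\<le>n. e i * 1) = tt e n" for n by (simp add: tt_def)
  show "(\<lambda>n. tt e n * r ^ n) sums ((\<Sum>n. e n * r ^ n) / (1 - r))"
    using powser_cauchy(1)[OF a b] r by (simp add: t suminf_geometric tt_def)
  show "summable (\<lambda>n. norm (tt e n * r ^ n))"
    using powser_cauchy(2)[OF a b] by (simp add: t tt_def)
qed

lemma PP_gen:
  fixes e :: "nat \<Rightarrow> real"
  assumes conv: "\<And>x::real. \<bar>x\<bar> < 1 \<Longrightarrow> summable (\<lambda>n. e n * x ^ n)" and r: "\<bar>r\<bar> < 1"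
  shows "(\<lambda>n. PP p e n * r ^ n) sums ((\<Sum>n. e n * r ^ n) / (1 - r) ^ Suc (Suc p))"
    and "summable (\<lambda>n. norm (PP p e n * r ^ n))"
proof -
  have a: "summable (\<lambda>n. norm (Wt p n * r ^ n))" by (rule Wt_absumm[OF r])
  have b: "summable (\<lambda>n. norm (tt e n * r ^ n))" by (rule tt_gen(2)[OF conv r])
  have "(\<lambda>n. PP p e n * r ^ n) sums ((\<Sum>n. Wt p n * r ^ n) * (\<Sum>n. tt e n * r ^ n))"
    using powser_cauchy(1)[OF a b] unfolding PP_def .
  moreover have "(\<Sum>n. Wt p n * r ^ n) = 1 / (1 - r) ^ Suc p" using Wt_gen[OF r] by (rule sums_unique[symmetric])
  moreover have "(\<Sum>n. tt e n * r ^ n) = (\<Sum>n. e n * r ^ n) / (1 - r)"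
    using tt_gen(1)[OF conv r] by (rule sums_unique[symmetric])
  ultimately show "(\<lambda>n. PP p e n * r ^ n) sums ((\<Sum>n. e n * r ^ n) / (1 - r) ^ Suc (Suc p))"
    by (simp add: field_simps)
  show "summable (\<lambda>n. norm (PP p e n * r ^ n))"
    using powser_cauchy(2)[OF a b] unfolding PP_def .
qed

lemma abel_weighted:
  fixes w \<sigma> :: "nat \<Rightarrow> real"
  assumes w0: "\<And>n. w n \<ge> 0"
    and ws: "\<And>r. 0 < r \<Longrightarrow> r < 1 \<Longrightarrow> (\<lambda>n. w n * r ^ n) sums (1 / (1 - r) ^ q)"
    and \<sigma>: "\<sigma> \<longlonglongrightarrow> a" and q: "q \<ge> 1"
  shows "((\<lambda>r. (1 - r) ^ q * (\<Sum>n. w n * \<sigma> n * r ^ n)) \<longlongrightarrow> a) (at_left 1)"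
proof (rule tendstoI)
  fix \<epsilon> :: real assume \<epsilon>: "\<epsilon> > 0"
  obtain M where M: "M > 0" "\<And>n. norm (\<sigma> n) \<le> M"
  proof -
    have "Bseq \<sigma>" using \<sigma> by (intro convergent_imp_Bseq) (auto simp: convergent_def)
    then show ?thesis using that by (auto elim!: BseqE)
  qed
  obtain N where N: "\<And>n. n \<ge> N \<Longrightarrow> \<bar>\<sigma> n - a\<bar> < \<epsilon> / 2"
    using LIMSEQ_D[OF \<sigma>, of "\<epsilon> / 2"] \<epsilon> by auto
  define C where "C = (\<Sum>n<N. w n * \<bar>\<sigma> n - a\<bar>)"
  have C0: "C \<ge> 0" unfolding C_def using w0 by (intro sum_nonneg mult_nonneg_nonneg) auto
  have lim0: "((\<lambda>r. (1 - r) ^ q * C) \<longlongrightarrow> (1 - 1) ^ q * C) (at_left (1::real))"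
    by (intro tendsto_intros)
  moreover have "(0::real) ^ q = 0" using q by (simp add: power_0_left)
  ultimately have "((\<lambda>r. (1 - r) ^ q * C) \<longlongrightarrow> 0) (at_left (1::real))" by simp
  then have ev: "eventually (\<lambda>r. (1 - r) ^ q * C < \<epsilon> / 2) (at_left (1::real))"
    using \<epsilon> by (intro order_tendstoD) auto
  show "eventually (\<lambda>r. dist ((1 - r) ^ q * (\<Sum>n. w n * \<sigma> n * r ^ n)) a < \<epsilon>) (at_left 1)"
    using ev eventually_at_left_real[of 0 "1::real", OF zero_less_one]
  proof eventually_elim
    case (elim r)
    then have r: "0 < r" "r < 1" by auto
    have s0: "summable (\<lambda>n. w n * r ^ n)" using ws[OF r] by (rule sums_summable)
    have sum0: "(\<Sum>n. w n * r ^ n) = 1 / (1 - r) ^ q" using ws[OF r] by (rule sums_unique[symmetric])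
    have s1: "summable (\<lambda>n. w n * \<sigma> n * r ^ n)"
    proof (rule summable_comparison_test'[where g = "\<lambda>n. M * (w n * r ^ n)"])
      show "summable (\<lambda>n. M * (w n * r ^ n))" by (intro summable_mult s0)
      fix n
      have "\<bar>\<sigma> n\<bar> \<le> M" using M(2)[of n] by simp
      then have "w n * r ^ n * \<bar>\<sigma> n\<bar> \<le> w n * r ^ n * M"
        using w0[of n] r by (intro mult_left_mono) auto
      then show "norm (w n * \<sigma> n * r ^ n) \<le> M * (w n * r ^ n)"
        using w0[of n] r by (simp add: abs_mult algebra_simps)
    qed
    have s2: "summable (\<lambda>n. w n * (\<sigma> n - a) * r ^ n)"
      unfolding right_diff_distrib left_diff_distrib
      using summable_diff[OF s1 summable_mult[OF s0, of a]] by (simp add: algebra_simps)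
    have eq: "(\<Sum>n. w n * \<sigma> n * r ^ n) - a / (1 - r) ^ q = (\<Sum>n. w n * (\<sigma> n - a) * r ^ n)"
    proof -
      have "(\<Sum>n. w n * \<sigma> n * r ^ n) - a * (\<Sum>n. w n * r ^ n) = (\<Sum>n. w n * \<sigma> n * r ^ n - a * (w n * r ^ n))"
        using suminf_diff[OF s1 summable_mult[OF s0, of a]] suminf_mult[OF s0, of a] by simp
      then show ?thesis by (simp add: sum0 algebra_simps)
    qed
    define bnd where "bnd = (\<lambda>n. (\<epsilon> / 2) * (w n * r ^ n) + (if n < N then w n * \<bar>\<sigma> n - a\<bar> else 0))"
    have sfin: "summable (\<lambda>n. if n < N then w n * \<bar>\<sigma> n - a\<bar> else 0)"
      by (rule summable_finite[of "{..<N}"]) auto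
    have sb: "summable bnd" unfolding bnd_def
      by (intro summable_add summable_mult s0 sfin)
    have bnd_sum: "(\<Sum>n. bnd n) = (\<epsilon> / 2) / (1 - r) ^ q + C"
    proof -
      have "(\<Sum>n. if n < N then w n * \<bar>\<sigma> n - a\<bar> else 0) = C"
        unfolding C_def by (subst suminf_finite[of "{..<N}"]) auto
      moreover have "(\<Sum>n. bnd n) = (\<Sum>n. (\<epsilon> / 2) * (w n * r ^ n)) + (\<Sum>n. if n < N then w n * \<bar>\<sigma> n - a\<bar> else 0)"
        unfolding bnd_def by (rule suminf_add[OF summable_mult[OF s0] sfin, symmetric])
      moreover have "(\<Sum>n. (\<epsilon> / 2) * (w n * r ^ n)) = (\<epsilon> / 2) * (1 / (1 - r) ^ q)"
        using suminf_mult[OF s0, of "\<epsilon> / 2"] sum0 by simp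
      ultimately show ?thesis by simp
    qed
    have pw: "\<bar>w n * (\<sigma> n - a) * r ^ n\<bar> \<le> bnd n" for n
    proof -
      have af: "\<bar>w n * (\<sigma> n - a) * r ^ n\<bar> = w n * r ^ n * \<bar>\<sigma> n - a\<bar>"
        using w0[of n] r by (simp add: abs_mult)
      show ?thesis unfolding af
    proof (cases "n < N")
      case True
      have "r ^ n \<le> 1" using r by (intro power_le_one) auto
      then have "w n * \<bar>\<sigma> n - a\<bar> * r ^ n \<le> w n * \<bar>\<sigma> n - a\<bar> * 1"
        using w0[of n] r by (intro mult_left_mono) auto
      moreover have "0 \<le> (\<epsilon> / 2) * (w n * r ^ n)" using w0[of n] r \<epsilon> by auto
      ultimately show "w n * r ^ n * \<bar>\<sigma> n - a\<bar> \<le> bnd n" using True w0[of n] r by (simp add: bnd_def algebra_simps)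
    next
      case False
      then have "\<bar>\<sigma> n - a\<bar> \<le> \<epsilon> / 2" using N[of n] by auto
      then have "w n * r ^ n * \<bar>\<sigma> n - a\<bar> \<le> w n * r ^ n * (\<epsilon> / 2)"
        using w0[of n] r by (intro mult_left_mono) auto
      then show "w n * r ^ n * \<bar>\<sigma> n - a\<bar> \<le> bnd n" using False w0[of n] r by (simp add: bnd_def algebra_simps)
    qed
    qed
    have up: "(\<Sum>n. w n * (\<sigma> n - a) * r ^ n) \<le> (\<Sum>n. bnd n)"
      using pw by (intro suminf_le s2 sb) (auto simp: abs_le_iff)
    have lo: "- (\<Sum>n. bnd n) \<le> (\<Sum>n. w n * (\<sigma> n - a) * r ^ n)"
    proof -
      have "(\<Sum>n. - bnd n) \<le> (\<Sum>n. w n * (\<sigma> n - a) * r ^ n)"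
        using pw by (intro suminf_le s2 summable_minus sb) (metis abs_le_iff minus_le_iff)
      then show ?thesis by (simp add: suminf_minus[OF sb])
    qed
    have pq: "(1 - r) ^ q > 0" using r by simp
    have "(1 - r) ^ q * (\<Sum>n. w n * \<sigma> n * r ^ n) - a = (1 - r) ^ q * (\<Sum>n. w n * (\<sigma> n - a) * r ^ n)"
    proof -
      have "(1 - r) ^ q * (\<Sum>n. w n * \<sigma> n * r ^ n) - a = (1 - r) ^ q * ((\<Sum>n. w n * \<sigma> n * r ^ n) - a / (1 - r) ^ q)"
        using pq r by (simp add: right_diff_distrib)
      then show ?thesis unfolding eq .
    qed
    moreover have "\<bar>(1 - r) ^ q * (\<Sum>n. w n * (\<sigma> n - a) * r ^ n)\<bar> \<le> (1 - r) ^ q * ((\<epsilon> / 2) / (1 - r) ^ q + C)"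
      using up lo pq unfolding bnd_sum by (simp add: abs_mult abs_le_iff)
    moreover have "(1 - r) ^ q * ((\<epsilon> / 2) / (1 - r) ^ q + C) = \<epsilon> / 2 + (1 - r) ^ q * C"
      using pq r by (simp add: field_simps)
    ultimately show ?case using elim(1) by (simp add: dist_real_def)
  qed
qed

definition gI :: "(nat \<Rightarrow> real) \<Rightarrow> nat \<Rightarrow> real" where
  "gI f n = (if n = 0 then 0 else f (n - 1) / real n)"

lemma integ_summable:
  fixes f :: "nat \<Rightarrow> real"
  assumes fs: "\<And>x::real. \<bar>x\<bar> < 1 \<Longrightarrow> summable (\<lambda>n. f n * x ^ n)" and r: "\<bar>r\<bar> < 1"
  shows "summable (\<lambda>n. gI f n * r ^ n)"
proof -
  have a: "summable (\<lambda>n. norm (f n * r ^ n))" by (rule abs_summ[OF fs r])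
  have "summable (\<lambda>n. gI f (Suc n) * r ^ Suc n)"
  proof (rule summable_comparison_test'[OF a])
    fix n
    have "\<bar>f n\<bar> * \<bar>r\<bar> ^ n * \<bar>r\<bar> / real (Suc n) \<le> \<bar>f n\<bar> * \<bar>r\<bar> ^ n * 1 / 1"
      using r by (intro frac_le mult_left_mono) auto
    then show "norm (gI f (Suc n) * r ^ Suc n) \<le> norm (f n * r ^ n)"
      by (simp add: gI_def abs_mult power_abs field_simps)
  qed
  then show ?thesis by (subst summable_Suc_iff[symmetric])
qed

lemma aux_deriv:
  fixes u A c :: real
  assumes "u > 0" "A > 0"
  shows "- (c * ((0 - 1) * A) * inverse ((A * u) ^ Suc (Suc 0))) = c / (A * u * u)"
  using assms by (simp add: field_simps power2_eq_square)

lemma integ_step: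
  fixes f :: "nat \<Rightarrow> real"
  assumes k: "k \<ge> 1"
    and fs: "\<And>x::real. \<bar>x\<bar> < 1 \<Longrightarrow> summable (\<lambda>n. f n * x ^ n)"
    and lim: "((\<lambda>r. (1 - r) ^ Suc k * (\<Sum>n. f n * r ^ n)) \<longlongrightarrow> c) (at_left 1)"
  shows "((\<lambda>r. (1 - r) ^ k * (\<Sum>n. gI f n * r ^ n)) \<longlongrightarrow> c / real k) (at_left 1)"
proof -
  define N where "N = (\<lambda>r. \<Sum>n. gI f n * r ^ n)"
  define F where "F = (\<lambda>r. \<Sum>n. f n * r ^ n)"
  define G where "G = (\<lambda>r::real. inverse ((1 - r) ^ k))"
  define G' where "G' = (\<lambda>r::real. real k / (1 - r) ^ Suc k)"
  have ev01: "eventually (\<lambda>r. r \<in> {0<..<1}) (at_left (1::real))"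
    using eventually_at_left_real[of 0 "1::real", OF zero_less_one] .
  have dN: "DERIV N r :> F r" if r: "r \<in> {0<..<1}" for r
  proof -
    have "diffs (gI f) = f" by (simp add: diffs_def gI_def fun_eq_iff)
    moreover have "(N has_field_derivative (\<Sum>n. diffs (gI f) n * r ^ n)) (at r)"
      unfolding N_def using r by (intro termdiffs_strong'[of 1]) (auto intro: integ_summable[OF fs])
    ultimately show ?thesis by (simp add: F_def)
  qed
  have dG: "DERIV G r :> G' r" if r: "r \<in> {0<..<1}" for r
  proof -
    have "DERIV (\<lambda>r. (1 - r) ^ k) r :> real k * ((0 - 1) * (1 - r) ^ (k - Suc 0))"
      by (intro DERIV_power DERIV_diff DERIV_const DERIV_ident)
    then have "DERIV G r :> - (real k * ((0 - 1) * (1 - r) ^ (k - Suc 0)) * inverse (((1 - r) ^ k) ^ Suc (Suc 0)))"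
      unfolding G_def using r by (intro DERIV_inverse_fun[of "\<lambda>r. (1 - r) ^ k"]) auto
    moreover have "- (real k * ((0 - 1) * (1 - r) ^ (k - Suc 0)) * inverse (((1 - r) ^ k) ^ Suc (Suc 0))) = G' r"
    proof -
      have e1: "(1 - r) ^ k = (1 - r) ^ (k - Suc 0) * (1 - r)" using k by (cases k) (auto simp: power_Suc2)
      have e2: "(1 - r) ^ Suc k = (1 - r) ^ (k - Suc 0) * (1 - r) * (1 - r)" using e1 by simp
      show ?thesis unfolding G'_def e2 unfolding e1
        using r by (intro aux_deriv) auto
    qed
    ultimately show ?thesis by simp
  qed
  have Gtop: "LIM r at_left 1. G r :> at_top"
    unfolding G_def
  proof (rule filterlim_inverse_at_top)
    have "((\<lambda>r::real. (1 - r) ^ k) \<longlongrightarrow> (1 - 1) ^ k) (at_left 1)" by (intro tendsto_intros)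
    then show "((\<lambda>r::real. (1 - r) ^ k) \<longlongrightarrow> 0) (at_left 1)" using k by (simp add: power_0_left)
    show "eventually (\<lambda>r::real. 0 < (1 - r) ^ k) (at_left 1)" using ev01 by eventually_elim auto
  qed
  have ratio: "((\<lambda>r. F r / G' r) \<longlongrightarrow> c / real k) (at_left 1)"
  proof -
    have "((\<lambda>r. (1 - r) ^ Suc k * F r / real k) \<longlongrightarrow> c / real k) (at_left 1)"
      using lim unfolding F_def by (intro tendsto_divide tendsto_const) (use k in auto)
    moreover have "eventually (\<lambda>r. (1 - r) ^ Suc k * F r / real k = F r / G' r) (at_left 1)"
      using ev01 by eventually_elim (simp add: G'_def)
    ultimately show ?thesis by (rule Lim_transform_eventually)
  qed
  have "((\<lambda>r. N r / G r) \<longlongrightarrow> c / real k) (at_left 1)"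
  proof (rule lhopital_left_at_top[OF Gtop])
    show "eventually (\<lambda>r. G' r \<noteq> 0) (at_left 1)" using ev01 by eventually_elim (use k in \<open>auto simp: G'_def\<close>)
    show "eventually (\<lambda>r. DERIV N r :> F r) (at_left 1)" using ev01 by eventually_elim (rule dN)
    show "eventually (\<lambda>r. DERIV G r :> G' r) (at_left 1)" using ev01 by eventually_elim (rule dG)
  qed (rule ratio)
  moreover have "eventually (\<lambda>r. N r / G r = (1 - r) ^ k * (\<Sum>n. gI f n * r ^ n)) (at_left 1)"
    using ev01 by eventually_elim (simp add: N_def G_def divide_inverse mult.commute)
  ultimately show ?thesis by (rule Lim_transform_eventually)
qed

definition Fj :: "nat \<Rightarrow> (nat \<Rightarrow> real) \<Rightarrow> nat \<Rightarrow> nat \<Rightarrow> real" where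
  "Fj p e j n = (if n < j then 0 else PP p e (n - j) * fact (n - j) / fact n)"

lemma Fj_0: "Fj p e 0 = PP p e"
  by (simp add: Fj_def fun_eq_iff)

lemma gI_Fj: "gI (Fj p e j) = Fj p e (Suc j)"
proof
  fix n show "gI (Fj p e j) n = Fj p e (Suc j) n"
  proof (cases n)
    case 0 then show ?thesis by (simp add: gI_def Fj_def)
  next
    case (Suc n')
    show ?thesis
    proof (cases "n' < j")
      case True then show ?thesis using Suc by (simp add: gI_def Fj_def)
    next
      case False
      have "fact (Suc n') = real (Suc n') * (fact n' :: real)" by simp
      then show ?thesis using Suc False by (simp add: gI_def Fj_def field_simps)
    qed
  qed
qed

lemma Fj_summable:
  fixes e :: "nat \<Rightarrow> real"
  assumes conv: "\<And>x::real. \<bar>x\<bar> < 1 \<Longrightarrow> summable (\<lambda>n. e n * x ^ n)"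
  shows "\<bar>r\<bar> < 1 \<Longrightarrow> summable (\<lambda>n. Fj p e j n * r ^ n)"
proof (induction j arbitrary: r)
  case 0
  then have r: "\<bar>r\<bar> < 1" by simp
  show ?case unfolding Fj_0 using PP_gen(2)[OF conv r, of p] by (rule summable_norm_cancel)
next
  case (Suc j)
  then show ?case unfolding gI_Fj[symmetric] by (intro integ_summable[OF Suc.IH])
qed

lemma Fj_last: "Fj p e (Suc p) n = (if n < Suc p then 0 else sg p e (n - Suc p) / fact (Suc p))"
proof (cases "n < Suc p")
  case False
  define i where "i = n - Suc p"
  have n: "n = i + Suc p" using False by (simp add: i_def)
  have "fact (Suc p) * fact i * (n choose Suc p) = fact n"
    using binomial_fact_lemma[of "Suc p" n] False by (simp add: n)
  then have f: "(fact n :: real) = fact (Suc p) * fact i * Wt (Suc p) i"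
    unfolding Wt_def n by (metis of_nat_fact of_nat_mult add.commute)
  have W: "Wt (Suc p) i > 0" by (rule Wt_pos)
  show ?thesis using False W unfolding Fj_def sg_def i_def[symmetric] f
    by (simp add: field_simps del: fact_Suc)
qed (simp add: Fj_def)

lemma chain:
  fixes e :: "nat \<Rightarrow> real"
  assumes conv: "\<And>x::real. \<bar>x\<bar> < 1 \<Longrightarrow> summable (\<lambda>n. e n * x ^ n)"
    and lim: "((\<lambda>r. \<Sum>n. e n * r ^ n) \<longlongrightarrow> a) (at_left 1)"
  shows "j \<le> Suc p \<Longrightarrow> ((\<lambda>r. (1 - r) ^ (Suc (Suc p) - j) * (\<Sum>n. Fj p e j n * r ^ n))
            \<longlongrightarrow> a * fact (Suc p - j) / fact (Suc p)) (at_left 1)"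
proof (induction j)
  case 0
  have "eventually (\<lambda>r. (\<Sum>n. e n * r ^ n) = (1 - r) ^ (Suc (Suc p) - 0) * (\<Sum>n. Fj p e 0 n * r ^ n)) (at_left (1::real))"
    using eventually_at_left_real[of 0 "1::real", OF zero_less_one]
  proof eventually_elim
    case (elim r)
    then have r: "\<bar>r\<bar> < 1" "r < 1" by auto
    have "(\<Sum>n. PP p e n * r ^ n) = (\<Sum>n. e n * r ^ n) / (1 - r) ^ Suc (Suc p)"
      using PP_gen(1)[OF conv r(1)] by (rule sums_unique[symmetric])
    then show ?case using r by (simp add: Fj_0)
  qed
  from Lim_transform_eventually[OF lim this] show ?case by simp
next
  case (Suc j)
  then have j: "j \<le> p" by simp
  have IH: "((\<lambda>r. (1 - r) ^ Suc (Suc p - j) * (\<Sum>n. Fj p e j n * r ^ n)) \<longlongrightarrow> a * fact (Suc p - j) / fact (Suc p)) (at_left 1)"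
    using Suc j by (simp add: Suc_diff_le)
  have k: "Suc p - j \<ge> 1" using j by simp
  have "((\<lambda>r. (1 - r) ^ (Suc p - j) * (\<Sum>n. gI (Fj p e j) n * r ^ n)) \<longlongrightarrow> a * fact (Suc p - j) / fact (Suc p) / real (Suc p - j)) (at_left 1)"
    by (rule integ_step[OF k _ IH]) (rule Fj_summable[OF conv])
  moreover have "a * fact (Suc p - j) / fact (Suc p) / real (Suc p - j) = a * fact (Suc p - Suc j) / fact (Suc p)"
  proof -
    have 1: "Suc p - j = Suc (p - j)" using j by simp
    have 2: "Suc p - Suc j = p - j" by simp
    have 3: "fact (Suc (p - j)) = real (Suc (p - j)) * (fact (p - j) :: real)" by (rule fact_Suc)
    have 4: "real (Suc (p - j)) > 0" by simp
    show ?thesis unfolding 1 2 3 using 4 by (simp add: field_simps del: fact_Suc of_nat_Suc)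
  qed
  ultimately show ?case by (simp add: gI_Fj)
qed

lemma sg_bound: "\<bar>sg p e n\<bar> \<le> \<bar>PP p e n\<bar>"
proof -
  have "0 < ((n + Suc p) choose Suc p)" by (rule zero_less_binomial) simp
  then have W: "Wt (Suc p) n \<ge> 1" unfolding Wt_def by linarith
  have a: "\<bar>sg p e n\<bar> = \<bar>PP p e n\<bar> / Wt (Suc p) n"
    unfolding sg_def abs_divide using W by simp
  have "\<bar>PP p e n\<bar> / Wt (Suc p) n \<le> \<bar>PP p e n\<bar> / 1"
    using W by (intro divide_left_mono) auto
  then show ?thesis unfolding a by simp
qed

lemma sg_summable:
  fixes e :: "nat \<Rightarrow> real"
  assumes conv: "\<And>x::real. \<bar>x\<bar> < 1 \<Longrightarrow> summable (\<lambda>n. e n * x ^ n)" and r: "\<bar>r\<bar> < 1"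
  shows "summable (\<lambda>n. sg p e n * r ^ n)"
proof (rule summable_comparison_test'[OF PP_gen(2)[OF conv r, of p]])
  fix n show "norm (sg p e n * r ^ n) \<le> norm (PP p e n * r ^ n)"
    unfolding real_norm_def abs_mult by (intro mult_right_mono sg_bound abs_ge_zero)
qed

lemma sg_abel:
  fixes e :: "nat \<Rightarrow> real"
  assumes conv: "\<And>x::real. \<bar>x\<bar> < 1 \<Longrightarrow> summable (\<lambda>n. e n * x ^ n)"
    and lim: "((\<lambda>r. \<Sum>n. e n * r ^ n) \<longlongrightarrow> a) (at_left 1)"
  shows "((\<lambda>r. (1 - r) * (\<Sum>n. sg p e n * r ^ n)) \<longlongrightarrow> a) (at_left 1)"
proof -
  have L: "((\<lambda>r. (1 - r) * (\<Sum>n. Fj p e (Suc p) n * r ^ n)) \<longlongrightarrow> a / fact (Suc p)) (at_left 1)"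
    using chain[OF conv lim, of "Suc p" p] by simp
  have eq: "(\<Sum>n. Fj p e (Suc p) n * r ^ n) = r ^ Suc p / fact (Suc p) * (\<Sum>n. sg p e n * r ^ n)"
    if r: "\<bar>r\<bar> < 1" for r
  proof -
    have "(\<lambda>i. sg p e i * r ^ i) sums (\<Sum>n. sg p e n * r ^ n)"
      using sg_summable[OF conv r] by (rule summable_sums)
    then have "(\<lambda>i. r ^ Suc p / fact (Suc p) * (sg p e i * r ^ i)) sums (r ^ Suc p / fact (Suc p) * (\<Sum>n. sg p e n * r ^ n))"
      by (rule sums_mult)
    moreover have "r ^ Suc p / fact (Suc p) * (sg p e i * r ^ i) = Fj p e (Suc p) (i + Suc p) * r ^ (i + Suc p)" for i
      by (simp add: Fj_last power_add field_simps)
    ultimately have "(\<lambda>i. Fj p e (Suc p) (i + Suc p) * r ^ (i + Suc p)) sums (r ^ Suc p / fact (Suc p) * (\<Sum>n. sg p e n * r ^ n))"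
      by simp
    then have "(\<lambda>n. Fj p e (Suc p) n * r ^ n) sums (r ^ Suc p / fact (Suc p) * (\<Sum>n. sg p e n * r ^ n) + (\<Sum>i<Suc p. Fj p e (Suc p) i * r ^ i))"
      by (subst (asm) sums_iff_shift)
    moreover have "(\<Sum>i<Suc p. Fj p e (Suc p) i * r ^ i) = 0" by (simp add: Fj_last)
    ultimately show ?thesis by (simp add: sums_iff)
  qed
  have ev: "eventually (\<lambda>r. ((1 - r) * (\<Sum>n. Fj p e (Suc p) n * r ^ n)) * (fact (Suc p) / r ^ Suc p) =
      (1 - r) * (\<Sum>n. sg p e n * r ^ n)) (at_left (1::real))"
    using eventually_at_left_real[of 0 "1::real", OF zero_less_one]
  proof eventually_elim
    case (elim r)
    then have "\<bar>r\<bar> < 1" "r > 0" by auto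
    then show ?case by (simp add: eq)
  qed
  have "((\<lambda>r. ((1 - r) * (\<Sum>n. Fj p e (Suc p) n * r ^ n)) * (fact (Suc p) / r ^ Suc p)) \<longlongrightarrow>
      a / fact (Suc p) * (fact (Suc p) / 1 ^ Suc p)) (at_left (1::real))"
    by (intro tendsto_mult L tendsto_divide tendsto_const tendsto_power) (auto intro: tendsto_ident_at)
  then have "((\<lambda>r. ((1 - r) * (\<Sum>n. Fj p e (Suc p) n * r ^ n)) * (fact (Suc p) / r ^ Suc p)) \<longlongrightarrow> a) (at_left (1::real))"
    by simp
  then show ?thesis using ev by (rule Lim_transform_eventually)
qed

lemma cm_tt_eq: "n \<ge> 1 \<Longrightarrow> cesaro_mean (Suc p) (tt e) n = rho p n * sg p e n"
  unfolding cm_t rho_def sg_def using Wt_pos[of "Suc p" n] by (simp add: field_simps)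

lemma cm_q_eq: "n \<ge> 1 \<Longrightarrow> cesaro_mean (Suc p) (\<lambda>k. real k * e k) n = rho p n * (QQ p e n / Wt (Suc p) n)"
  unfolding cm_q rho_def using Wt_pos[of "Suc p" n] by (simp add: field_simps)

lemma rho_pos: "n \<ge> 1 \<Longrightarrow> rho p n > 0"
  using rho_ge1[of n p] by simp

lemma partial_d: "(\<Sum>n\<le>N. sg p e n - (if n = 0 then 0 else sg p e (n - 1))) = sg p e N"
  by (induction N) auto

theorem abel_cesaro_core:
  fixes e :: "nat \<Rightarrow> real"
  assumes conv: "\<And>x::real. \<bar>x\<bar> < 1 \<Longrightarrow> summable (\<lambda>n. e n * x ^ n)"
    and tauber: "\<exists>K>0. \<forall>n\<ge>1. cesaro_mean (Suc p) (\<lambda>k. real k * e k) n > - K"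
  shows "((\<lambda>r. \<Sum>n. e n * r ^ n) \<longlongrightarrow> a) (at_left 1) \<longleftrightarrow> cesaro_lim (Suc p) (tt e) a"
proof
  assume lim: "((\<lambda>r. \<Sum>n. e n * r ^ n) \<longlongrightarrow> a) (at_left 1)"
  obtain K where K: "K > 0" "\<And>n. n \<ge> 1 \<Longrightarrow> cesaro_mean (Suc p) (\<lambda>k. real k * e k) n > - K"
    using tauber by blast
  define d where "d = (\<lambda>n. sg p e n - (if n = 0 then 0 else sg p e (n - 1)))"
  have dsums: "(\<lambda>n. d n * r ^ n) sums ((1 - r) * (\<Sum>n. sg p e n * r ^ n))" if r: "\<bar>r\<bar> < 1" for r
  proof -
    define S where "S = (\<Sum>n. sg p e n * r ^ n)"
    have s1: "(\<lambda>n. sg p e n * r ^ n) sums S" unfolding S_def using sg_summable[OF conv r] by (rule summable_sums)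
    define f where "f = (\<lambda>n. (if n = 0 then 0 else sg p e (n - 1)) * r ^ n)"
    have "(\<lambda>n. f (Suc n)) sums (r * S)"
      unfolding f_def using sums_mult[OF s1, of r] by (simp add: algebra_simps)
    then have "f sums (r * S + f 0)" by (simp only: sums_Suc_iff)
    then have s2: "f sums (r * S)" by (simp add: f_def)
    have "(\<lambda>n. sg p e n * r ^ n - f n) sums (S - r * S)" by (rule sums_diff[OF s1 s2])
    moreover have "(\<lambda>n. sg p e n * r ^ n - f n) = (\<lambda>n. d n * r ^ n)"
      by (simp add: fun_eq_iff d_def f_def algebra_simps)
    ultimately show ?thesis by (simp add: S_def algebra_simps)
  qed
  have dconv: "summable (\<lambda>n. d n * x ^ n)" if "\<bar>x\<bar> < 1" for x :: real
    using dsums[OF that] by (rule sums_summable)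
  have dlim: "((\<lambda>r. \<Sum>n. d n * r ^ n) \<longlongrightarrow> a) (at_left 1)"
  proof -
    have "eventually (\<lambda>r. (1 - r) * (\<Sum>n. sg p e n * r ^ n) = (\<Sum>n. d n * r ^ n)) (at_left (1::real))"
      using eventually_at_left_real[of 0 "1::real", OF zero_less_one]
    proof eventually_elim
      case (elim r)
      then have "\<bar>r\<bar> < 1" by auto
      then show ?case using dsums by (simp add: sums_iff)
    qed
    with sg_abel[OF conv lim, of p] show ?thesis by (rule Lim_transform_eventually)
  qed
  have dK: "real n * d n \<ge> - K" if n: "n \<ge> 1" for n
  proof -
    have "real n * d n = QQ p e n / Wt (Suc p) n" unfolding d_def using sg_diff[OF n] n by simp
    moreover have cmq: "cesaro_mean (Suc p) (\<lambda>k. real k * e k) n = rho p n * (QQ p e n / Wt (Suc p) n)"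
      by (rule cm_q_eq[OF n])
    moreover have "rho p n \<ge> 1" by (rule rho_ge1[OF n])
    moreover have "cesaro_mean (Suc p) (\<lambda>k. real k * e k) n > - K" by (rule K(2)[OF n])
    ultimately show ?thesis
    proof -
      assume a1: "real n * d n = QQ p e n / Wt (Suc p) n" and a2: "cesaro_mean (Suc p) (\<lambda>k. real k * e k) n = rho p n * (QQ p e n / Wt (Suc p) n)"
        and a3: "rho p n \<ge> 1" and a4: "cesaro_mean (Suc p) (\<lambda>k. real k * e k) n > - K"
      define x where "x = QQ p e n / Wt (Suc p) n"
      have "rho p n * x > - K" using a2 a4 by (simp add: x_def)
      then have "x \<ge> - K"
      proof (cases "x \<ge> 0")
        case False
        then have "rho p n * x \<le> 1 * x" using a3 by (intro mult_right_mono_neg) auto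
        then show ?thesis using \<open>rho p n * x > - K\<close> by simp
      qed (use K in auto)
      then show ?thesis using a1 by (simp add: x_def)
    qed
  qed
  have "(\<lambda>N. \<Sum>n\<le>N. d n) \<longlonglongrightarrow> a" by (rule HL[OF dconv dlim dK])
  then have sg_lim: "sg p e \<longlonglongrightarrow> a" unfolding d_def partial_d by simp
  have "(\<lambda>n. rho p n * sg p e n) \<longlonglongrightarrow> 1 * a" by (intro tendsto_mult rho_lim sg_lim)
  moreover have "eventually (\<lambda>n. rho p n * sg p e n = cesaro_mean (Suc p) (tt e) n) sequentially"
    using eventually_ge_at_top[of "1::nat"] by eventually_elim (simp add: cm_tt_eq)
  ultimately have "(\<lambda>n. cesaro_mean (Suc p) (tt e) n) \<longlonglongrightarrow> a" using Lim_transform_eventually by fastforce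
  then show "cesaro_lim (Suc p) (tt e) a" by (simp add: cesaro_lim_def)
next
  assume "cesaro_lim (Suc p) (tt e) a"
  then have cm: "(\<lambda>n. cesaro_mean (Suc p) (tt e) n) \<longlonglongrightarrow> a" by (simp add: cesaro_lim_def)
  have "(\<lambda>n. cesaro_mean (Suc p) (tt e) n / rho p n) \<longlonglongrightarrow> a / 1"
    by (intro tendsto_divide cm rho_lim) auto
  moreover have "eventually (\<lambda>n. cesaro_mean (Suc p) (tt e) n / rho p n = sg p e n) sequentially"
    using eventually_ge_at_top[of "1::nat"]
  proof eventually_elim
    case (elim n)
    then have "rho p n > 0" by (rule rho_pos)
    then show ?case using elim by (simp add: cm_tt_eq)
  qed
  ultimately have sg_lim: "sg p e \<longlonglongrightarrow> a" using Lim_transform_eventually by fastforce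
  have "((\<lambda>r. (1 - r) ^ Suc (Suc p) * (\<Sum>n. Wt (Suc p) n * sg p e n * r ^ n)) \<longlongrightarrow> a) (at_left 1)"
  proof (rule abel_weighted[OF Wt_nonneg _ sg_lim])
    show "(\<lambda>n. Wt (Suc p) n * r ^ n) sums (1 / (1 - r) ^ Suc (Suc p))" if "0 < r" "r < 1" for r :: real
      using that by (intro Wt_gen) auto
  qed simp
  moreover have "eventually (\<lambda>r. (1 - r) ^ Suc (Suc p) * (\<Sum>n. Wt (Suc p) n * sg p e n * r ^ n) = (\<Sum>n. e n * r ^ n)) (at_left (1::real))"
    using eventually_at_left_real[of 0 "1::real", OF zero_less_one]
  proof eventually_elim
    case (elim r)
    then have r: "\<bar>r\<bar> < 1" "r < 1" by auto
    have "Wt (Suc p) n * sg p e n = PP p e n" for n using Wt_pos[of "Suc p" n] by (simp add: sg_def)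
    moreover have "(\<Sum>n. PP p e n * r ^ n) = (\<Sum>n. e n * r ^ n) / (1 - r) ^ Suc (Suc p)"
      using PP_gen(1)[OF conv r(1)] by (rule sums_unique[symmetric])
    ultimately show ?case using r by simp
  qed
  ultimately show "((\<lambda>r. \<Sum>n. e n * r ^ n) \<longlongrightarrow> a) (at_left 1)" by (rule Lim_transform_eventually)
qed

lemma rev_sum_W: "(\<Sum>k\<le>n. Wt p k * v (n - k)) = (\<Sum>j\<le>n. Wt p (n - j) * v j)"
proof -
  have "(\<Sum>k\<le>n. Wt p k * v (n - k)) = (\<Sum>k\<in>{0..n}. Wt p k * v (n - k))"
    by (simp add: atLeast0AtMost)
  also have "\<dots> = (\<Sum>j\<in>{0..n}. Wt p (n + 0 - j) * v (n - (n + 0 - j)))"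
    by (rule sum.atLeastAtMost_rev)
  also have "\<dots> = (\<Sum>j\<in>{0..n}. Wt p (n - j) * v j)"
    by (intro sum.cong refl) auto
  finally show ?thesis by (simp add: atLeast0AtMost)
qed

lemma Wt_mono: "i \<le> n \<Longrightarrow> Wt p i \<le> Wt p n"
  unfolding Wt_def by (simp add: binomial_right_mono)

lemma Wt_ratio_lim: "(\<lambda>n. Wt p n / Wt (Suc p) n) \<longlonglongrightarrow> 0"
proof -
  have "Wt p n / Wt (Suc p) n = real (Suc p) / real (n + Suc p)" for n
  proof -
    have "real (Suc p) * Wt (Suc p) n = real (n + Suc p) * Wt p n" by (rule Wt_rec2)
    then show ?thesis using Wt_pos[of "Suc p" n] by (simp add: field_simps)
  qed
  moreover have "(\<lambda>n. real (Suc p) / real (n + Suc p)) \<longlonglongrightarrow> 0"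
    using LIMSEQ_ignore_initial_segment[OF lim_const_over_n[of "real (Suc p)"], of "Suc p"] by simp
  ultimately show ?thesis by simp
qed

lemma avg_lim:
  fixes v :: "nat \<Rightarrow> real"
  assumes v: "v \<longlonglongrightarrow> l"
  shows "(\<lambda>n. (\<Sum>j\<le>n. Wt p (n - j) * v j) / Wt (Suc p) n) \<longlonglongrightarrow> l"
proof (rule tendstoI)
  fix \<epsilon> :: real assume \<epsilon>: "\<epsilon> > 0"
  obtain N where N: "\<And>j. j \<ge> N \<Longrightarrow> \<bar>v j - l\<bar> < \<epsilon> / 2"
    using LIMSEQ_D[OF v, of "\<epsilon> / 2"] \<epsilon> by auto
  define C where "C = (\<Sum>j<N. \<bar>v j - l\<bar>)"
  have C0: "C \<ge> 0" unfolding C_def by (intro sum_nonneg) auto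
  have "(\<lambda>n. Wt p n / Wt (Suc p) n * C) \<longlonglongrightarrow> 0 * C" by (intro tendsto_mult Wt_ratio_lim tendsto_const)
  then have "eventually (\<lambda>n. Wt p n / Wt (Suc p) n * C < \<epsilon> / 2) sequentially"
    using \<epsilon> by (intro order_tendstoD) auto
  then show "eventually (\<lambda>n. dist ((\<Sum>j\<le>n. Wt p (n - j) * v j) / Wt (Suc p) n) l < \<epsilon>) sequentially"
  proof eventually_elim
    case (elim n)
    define W where "W = Wt (Suc p) n"
    have W: "W > 0" unfolding W_def by (rule Wt_pos)
    have sumW: "(\<Sum>j\<le>n. Wt p (n - j)) = W"
      using rev_sum_W[where v = "\<lambda>_. 1" and p = p and n = n] hockey[of p n] by (simp add: W_def)
    have eq: "(\<Sum>j\<le>n. Wt p (n - j) * v j) / W - l = (\<Sum>j\<le>n. Wt p (n - j) * (v j - l)) / W"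
    proof -
      have "(\<Sum>j\<le>n. Wt p (n - j) * (v j - l)) = (\<Sum>j\<le>n. Wt p (n - j) * v j) - l * W"
      proof -
        have "(\<Sum>j\<le>n. Wt p (n - j) * (v j - l)) = (\<Sum>j\<le>n. Wt p (n - j) * v j) - (\<Sum>j\<le>n. Wt p (n - j) * l)"
          by (simp add: right_diff_distrib sum_subtractf)
        also have "(\<Sum>j\<le>n. Wt p (n - j) * l) = l * W"
          using sumW by (simp add: sum_distrib_left[symmetric] mult.commute)
        finally show ?thesis .
      qed
      then show ?thesis using W by (simp add: field_simps)
    qed
    have pw: "\<bar>Wt p (n - j) * (v j - l)\<bar> \<le> (\<epsilon> / 2) * Wt p (n - j) + Wt p n * (if j < N then \<bar>v j - l\<bar> else 0)"
      if "j \<le> n" for j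
    proof (cases "j < N")
      case True
      have "Wt p (n - j) * \<bar>v j - l\<bar> \<le> Wt p n * \<bar>v j - l\<bar>"
        by (intro mult_right_mono Wt_mono) auto
      moreover have "0 \<le> (\<epsilon> / 2) * Wt p (n - j)" using \<epsilon> Wt_nonneg[of p "n - j"] by simp
      ultimately show ?thesis using True Wt_nonneg[of p "n - j"] by (simp add: abs_mult)
    next
      case False
      then have "\<bar>v j - l\<bar> \<le> \<epsilon> / 2" using N[of j] by auto
      then have "Wt p (n - j) * \<bar>v j - l\<bar> \<le> Wt p (n - j) * (\<epsilon> / 2)"
        using Wt_nonneg[of p "n - j"] by (intro mult_left_mono) auto
      then show ?thesis using False Wt_nonneg[of p "n - j"] by (simp add: abs_mult mult.commute)
    qed
    have "\<bar>\<Sum>j\<le>n. Wt p (n - j) * (v j - l)\<bar> \<le> (\<Sum>j\<le>n. \<bar>Wt p (n - j) * (v j - l)\<bar>)" by (rule sum_abs)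
    also have "\<dots> \<le> (\<Sum>j\<le>n. (\<epsilon> / 2) * Wt p (n - j) + Wt p n * (if j < N then \<bar>v j - l\<bar> else 0))"
      using pw by (intro sum_mono) auto
    also have "\<dots> = (\<epsilon> / 2) * W + Wt p n * (\<Sum>j\<le>n. if j < N then \<bar>v j - l\<bar> else 0)"
      by (simp only: sum.distrib sum_distrib_left[symmetric] sumW)
    also have "(\<Sum>j\<le>n. if j < N then \<bar>v j - l\<bar> else 0) \<le> C"
    proof -
      have "(\<Sum>j\<le>n. if j < N then \<bar>v j - l\<bar> else 0) = (\<Sum>j\<in>{..n} \<inter> {..<N}. \<bar>v j - l\<bar>)"
        by (simp add: sum.If_cases Int_def)
      also have "\<dots> \<le> (\<Sum>j<N. \<bar>v j - l\<bar>)" by (intro sum_mono2) auto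
      finally show ?thesis by (simp add: C_def)
    qed
    then have "(\<epsilon> / 2) * W + Wt p n * (\<Sum>j\<le>n. if j < N then \<bar>v j - l\<bar> else 0) \<le> (\<epsilon> / 2) * W + Wt p n * C"
      using Wt_nonneg[of p n] by (intro add_left_mono mult_left_mono) auto
    finally have bnd: "\<bar>\<Sum>j\<le>n. Wt p (n - j) * (v j - l)\<bar> \<le> (\<epsilon> / 2) * W + Wt p n * C" .
    have "\<bar>(\<Sum>j\<le>n. Wt p (n - j) * (v j - l)) / W\<bar> \<le> ((\<epsilon> / 2) * W + Wt p n * C) / W"
      using bnd W by (simp add: abs_divide divide_right_mono)
    also have "\<dots> = \<epsilon> / 2 + Wt p n / W * C" using W by (simp add: field_simps)
    finally have f1: "\<bar>(\<Sum>j\<le>n. Wt p (n - j) * (v j - l)) / W\<bar> \<le> \<epsilon> / 2 + Wt p n / W * C" .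
    have f2: "Wt p n / W * C < \<epsilon> / 2" using elim by (simp add: W_def)
    have "\<bar>(\<Sum>j\<le>n. Wt p (n - j) * (v j - l)) / W\<bar> < \<epsilon>" using f1 f2 by linarith
    then show ?case unfolding dist_real_def W_def[symmetric] eq .
  qed
qed

lemma cm_reg:
  fixes v :: "nat \<Rightarrow> real"
  assumes v: "v \<longlonglongrightarrow> l"
  shows "(\<lambda>n. cesaro_mean (Suc p) v n) \<longlonglongrightarrow> l"
proof -
  have "(\<lambda>n. rho p n * ((\<Sum>j\<le>n. Wt p (n - j) * v j) / Wt (Suc p) n)) \<longlonglongrightarrow> 1 * l"
    by (intro tendsto_mult rho_lim avg_lim v)
  moreover have "eventually (\<lambda>n. rho p n * ((\<Sum>j\<le>n. Wt p (n - j) * v j) / Wt (Suc p) n) = cesaro_mean (Suc p) v n) sequentially"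
    using eventually_ge_at_top[of "1::nat"]
  proof eventually_elim
    case (elim n)
    define S where "S = (\<Sum>j\<le>n. Wt p (n - j) * v j)"
    define W where "W = Wt (Suc p) n"
    have W: "W > 0" unfolding W_def by (rule Wt_pos)
    have "rho p n * (S / W) = fact (Suc p) / real n ^ Suc p * S"
      unfolding rho_def W_def[symmetric] using W by simp
    then show ?case unfolding cm_gen rev_sum_W S_def W_def .
  qed
  ultimately show ?thesis using Lim_transform_eventually by fastforce
qed

lemma cm_linear:
  "cesaro_mean (Suc p) (\<lambda>k. f k - b * g k) n = cesaro_mean (Suc p) f n - b * cesaro_mean (Suc p) g n"
  unfolding cm_gen by (simp add: right_diff_distrib sum_subtractf sum_distrib_left algebra_simps)

lemma cm_add:
  "cesaro_mean (Suc p) (\<lambda>k. f k + g k) n = cesaro_mean (Suc p) f n + cesaro_mean (Suc p) g n"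
  unfolding cm_gen by (simp add: distrib_left sum.distrib algebra_simps)

lemma cm_ind_bound:
  assumes "\<And>k. 0 \<le> g k" "\<And>k. g k \<le> 1"
  shows "\<bar>cesaro_mean (Suc p) g n\<bar> \<le> \<bar>rho p n\<bar>"
proof -
  have c0: "fact (Suc p) / real n ^ Suc p \<ge> (0::real)" by simp
  have s0: "0 \<le> (\<Sum>k\<le>n. Wt p k * g (n - k))" using assms by (intro sum_nonneg mult_nonneg_nonneg Wt_nonneg) auto
  have s1: "(\<Sum>k\<le>n. Wt p k * g (n - k)) \<le> (\<Sum>k\<le>n. Wt p k)"
    using assms by (intro sum_mono) (simp add: Wt_nonneg mult_left_le)
  have "cesaro_mean (Suc p) g n \<le> fact (Suc p) / real n ^ Suc p * (\<Sum>k\<le>n. Wt p k)"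
    unfolding cm_gen using c0 s1 by (intro mult_left_mono)
  also have "\<dots> = rho p n" unfolding hockey rho_def by simp
  finally have "cesaro_mean (Suc p) g n \<le> rho p n" .
  moreover have "cesaro_mean (Suc p) g n \<ge> 0" unfolding cm_gen using c0 s0 by simp
  ultimately show ?thesis by simp
qed

lemma sum_inv_harm: "(\<Sum>k\<le>N. 1 / real k) = harm N"
  by (induction N) (simp_all add: harm_Suc divide_inverse harm_def)

theorem corollary4p9:
  fixes m :: nat and c :: "nat \<Rightarrow> real" and a b :: real
  assumes m: "m \<ge> 1"
    and conv: "\<And>r::real. \<bar>r\<bar> < 1 \<Longrightarrow> summable (\<lambda>n. c n * r ^ n)"
    and tauber: "\<exists>K>0. \<forall>n\<ge>1. cesaro_mean m (\<lambda>k. real k * c k) n > - K"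
  shows "((\<lambda>r. (\<Sum>n. c n * r ^ n) - a - b * ln (1 / (1 - r))) \<longlongrightarrow> 0) (at_left (1::real))
     \<longleftrightarrow> cesaro_lim m (\<lambda>N. if N = 0 then c 0 else (\<Sum>n\<le>N. c n) - b * ln (real N))
            (a + b * euler_mascheroni)"
proof -
  obtain p where mp: "m = Suc p" using m by (cases m) auto
  define e where "e = (\<lambda>n. c n - b / real n)"
  have hs: "summable (\<lambda>n. b / real n * r ^ n)" if r: "\<bar>r\<bar> < 1" for r :: real
  proof (rule summable_comparison_test'[where g = "\<lambda>n. \<bar>b\<bar> * \<bar>r\<bar> ^ n"])
    show "summable (\<lambda>n. \<bar>b\<bar> * \<bar>r\<bar> ^ n)" using r by (intro summable_mult summable_geometric) auto
    fix n
    have "\<bar>b\<bar> / real n * \<bar>r\<bar> ^ n \<le> \<bar>b\<bar> * \<bar>r\<bar> ^ n"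
    proof (cases n)
      case (Suc n')
      then have "\<bar>b\<bar> / real n \<le> \<bar>b\<bar> / 1" by (intro divide_left_mono) auto
      then show ?thesis by (intro mult_right_mono) auto
    qed simp
    then show "norm (b / real n * r ^ n) \<le> \<bar>b\<bar> * \<bar>r\<bar> ^ n"
      by (simp add: abs_mult power_abs)
  qed
  have conv_e: "summable (\<lambda>n. e n * r ^ n)" if r: "\<bar>r\<bar> < 1" for r :: real
    unfolding e_def left_diff_distrib by (intro summable_diff conv hs r)
  obtain K where K: "K > 0" "\<And>n. n \<ge> 1 \<Longrightarrow> cesaro_mean m (\<lambda>k. real k * c k) n > - K"
    using tauber by blast
  obtain R where R: "R > 0" "\<And>n. norm (rho p n) \<le> R"
  proof -
    have "Bseq (rho p)" using rho_lim by (intro convergent_imp_Bseq) (auto simp: convergent_def)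
    then show ?thesis using that by (auto elim!: BseqE)
  qed
  define ind where "ind = (\<lambda>k::nat. if k = 0 then 0 else (1::real))"
  have tauber_e: "\<exists>K>0. \<forall>n\<ge>1. cesaro_mean (Suc p) (\<lambda>k. real k * e k) n > - K"
  proof (intro exI[of _ "K + \<bar>b\<bar> * R"] conjI allI impI)
    show "K + \<bar>b\<bar> * R > 0" using K R by (simp add: add_pos_nonneg)
    fix n :: nat assume n: "n \<ge> 1"
    have "(\<lambda>k. real k * e k) = (\<lambda>k. real k * c k - b * ind k)"
      by (auto simp: fun_eq_iff e_def ind_def right_diff_distrib)
    then have "cesaro_mean (Suc p) (\<lambda>k. real k * e k) n = cesaro_mean (Suc p) (\<lambda>k. real k * c k) n - b * cesaro_mean (Suc p) ind n"
      by (simp add: cm_linear)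
    moreover have "\<bar>cesaro_mean (Suc p) ind n\<bar> \<le> R"
    proof -
      have "\<bar>cesaro_mean (Suc p) ind n\<bar> \<le> \<bar>rho p n\<bar>" by (rule cm_ind_bound) (auto simp: ind_def)
      then show ?thesis using R(2)[of n] by simp
    qed
    moreover have "\<bar>b * cesaro_mean (Suc p) ind n\<bar> \<le> \<bar>b\<bar> * R"
      using calculation(2) by (simp add: abs_mult mult_left_mono)
    moreover have "cesaro_mean (Suc p) (\<lambda>k. real k * c k) n > - K" using K(2)[OF n] mp by simp
    ultimately show "cesaro_mean (Suc p) (\<lambda>k. real k * e k) n > - (K + \<bar>b\<bar> * R)"
      by (simp add: abs_le_iff)
  qed
  have core: "((\<lambda>r. \<Sum>n. e n * r ^ n) \<longlongrightarrow> a) (at_left 1) \<longleftrightarrow> cesaro_lim (Suc p) (tt e) a"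
    by (rule abel_cesaro_core[OF conv_e tauber_e])
  have abel_side: "((\<lambda>r. (\<Sum>n. c n * r ^ n) - a - b * ln (1 / (1 - r))) \<longlongrightarrow> 0) (at_left (1::real))
      \<longleftrightarrow> ((\<lambda>r. \<Sum>n. e n * r ^ n) \<longlongrightarrow> a) (at_left 1)"
  proof -
    have "eventually (\<lambda>r. (\<Sum>n. c n * r ^ n) - a - b * ln (1 / (1 - r)) = (\<Sum>n. e n * r ^ n) - a) (at_left (1::real))"
      using eventually_at_left_real[of 0 "1::real", OF zero_less_one]
    proof eventually_elim
      case (elim r)
      then have r: "\<bar>r\<bar> < 1" "0 < r" "r < 1" by auto
      have "(\<lambda>n. - ((- (- r)) ^ n) / real n) sums ln (1 + - r)" using r by (intro ln_series') simp
      then have "(\<lambda>n. r ^ n / real n) sums (- ln (1 - r))"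
        using sums_minus by fastforce
      then have "(\<lambda>n. b * (r ^ n / real n)) sums (b * (- ln (1 - r)))"
        by (rule sums_mult)
      then have "(\<lambda>n. b / real n * r ^ n) sums (b * (- ln (1 - r)))"
        by (simp add: field_simps)
      then have s: "(\<Sum>n. b / real n * r ^ n) = b * ln (1 / (1 - r))"
        using r by (simp add: sums_iff ln_div)
      have "(\<Sum>n. e n * r ^ n) = (\<Sum>n. c n * r ^ n) - (\<Sum>n. b / real n * r ^ n)"
        unfolding e_def left_diff_distrib by (rule suminf_diff[OF conv[OF r(1)] hs[OF r(1)], symmetric])
      then show ?case using s by simp
    qed
    then have "((\<lambda>r. (\<Sum>n. c n * r ^ n) - a - b * ln (1 / (1 - r))) \<longlongrightarrow> 0) (at_left (1::real))
        \<longleftrightarrow> ((\<lambda>r. (\<Sum>n. e n * r ^ n) - a) \<longlongrightarrow> 0) (at_left 1)"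
      by (rule tendsto_cong)
    then show ?thesis by (simp add: LIM_zero_iff)
  qed
  define u where "u = (\<lambda>N. if N = 0 then c 0 else (\<Sum>n\<le>N. c n) - b * ln (real N))"
  define h where "h = (\<lambda>N. if N = 0 then 0 else b * (harm N - ln (real N)))"
  have uh: "u N = tt e N + h N" for N
  proof -
    have "tt e N = (\<Sum>n\<le>N. c n) - b * harm N"
      unfolding tt_def e_def by (simp add: sum_subtractf sum_distrib_left[symmetric] sum_inv_harm[symmetric] divide_inverse)
    then show ?thesis by (cases "N = 0") (auto simp: u_def h_def algebra_simps harm_def)
  qed
  have h_lim: "h \<longlonglongrightarrow> b * euler_mascheroni"
  proof -
    have "(\<lambda>N. b * (harm N - ln (real N))) \<longlonglongrightarrow> b * euler_mascheroni"
      by (intro tendsto_mult tendsto_const euler_mascheroni_LIMSEQ)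
    moreover have "eventually (\<lambda>N. b * (harm N - ln (real N)) = h N) sequentially"
      using eventually_ge_at_top[of "1::nat"] by eventually_elim (simp add: h_def)
    ultimately show ?thesis by (rule Lim_transform_eventually)
  qed
  have cmh: "(\<lambda>n. cesaro_mean (Suc p) h n) \<longlonglongrightarrow> b * euler_mascheroni" by (rule cm_reg[OF h_lim])
  have cmu: "cesaro_mean (Suc p) u n = cesaro_mean (Suc p) (tt e) n + cesaro_mean (Suc p) h n" for n
  proof -
    have "u = (\<lambda>k. tt e k + h k)" by (simp add: fun_eq_iff uh)
    then show ?thesis by (simp add: cm_add)
  qed
  have ces_side: "cesaro_lim m u (a + b * euler_mascheroni) \<longleftrightarrow> cesaro_lim (Suc p) (tt e) a"
  proof
    assume "cesaro_lim m u (a + b * euler_mascheroni)"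
    then have "(\<lambda>n. cesaro_mean (Suc p) u n) \<longlonglongrightarrow> a + b * euler_mascheroni" by (simp add: cesaro_lim_def mp)
    then have "(\<lambda>n. cesaro_mean (Suc p) u n - cesaro_mean (Suc p) h n) \<longlonglongrightarrow> (a + b * euler_mascheroni) - b * euler_mascheroni"
      by (intro tendsto_diff cmh)
    then show "cesaro_lim (Suc p) (tt e) a" by (simp add: cesaro_lim_def cmu)
  next
    assume "cesaro_lim (Suc p) (tt e) a"
    then have "(\<lambda>n. cesaro_mean (Suc p) (tt e) n) \<longlonglongrightarrow> a" by (simp add: cesaro_lim_def)
    then have "(\<lambda>n. cesaro_mean (Suc p) (tt e) n + cesaro_mean (Suc p) h n) \<longlonglongrightarrow> a + b * euler_mascheroni"
      by (intro tendsto_add cmh)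
    then show "cesaro_lim m u (a + b * euler_mascheroni)" by (simp add: cesaro_lim_def cmu mp)
  qed
  show ?thesis using abel_side core ces_side unfolding u_def by simp
qed

end
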